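(* Let $V$ be a finite dimensional symplectic vector space over a field $\mathbb{K}$ of characteristic zero, with symplectic form represented by $\omega_0\in\wedge^2V\subset V^{\otimes2}$. If $a\in\widehat T(V)$ satisfies $|a\,\omega_0^l|=0$ for all $l\ge1$, then there is $b\in\widehat T(V)$ such that $a=[\omega_0,b]$.
   Context: $\widehat T(V)=\prod_{m\ge0}V^{\otimes m}$ is the completed tensor algebra; $|\widehat T(V)|$ is its quotient by the closure of the span of commutators, with projection $x\mapsto|x|$. *)

theory Defs
  imports Main
begin

text \<open>
  V is modelled as the K-vector space with basis (e_i) indexed by a finite type 'i.
  The completed tensor algebra prod_m V^{\<otimes>m} is modelled as formal noncommutative
  power series: an element is the function sending a word w = [i1,...,im] to the
  coefficient of e_{i1} \<otimes> ... \<otimes> e_{im}.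
\<close>

type_synonym ('i, 'k) ctensor = "'i list \<Rightarrow> 'k"

definition tone :: "('i, 'k::comm_ring_1) ctensor" where
  "tone = (\<lambda>w. if w = [] then 1 else 0)"

definition tmul :: "('i, 'k::comm_ring_1) ctensor \<Rightarrow> ('i, 'k) ctensor \<Rightarrow> ('i, 'k) ctensor" where
  "tmul a b = (\<lambda>w. \<Sum>k\<le>length w. a (take k w) * b (drop k w))"

primrec tpow :: "('i, 'k::comm_ring_1) ctensor \<Rightarrow> nat \<Rightarrow> ('i, 'k) ctensor" where
  "tpow x 0 = tone"
| "tpow x (Suc n) = tmul x (tpow x n)"

definition tcomm :: "('i, 'k::comm_ring_1) ctensor \<Rightarrow> ('i, 'k) ctensor \<Rightarrow> ('i, 'k) ctensor" where
  "tcomm x y = (\<lambda>w. tmul x y w - tmul y x w)"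

definition comm_span :: "('i, 'k::comm_ring_1) ctensor set" where
  "comm_span = {s. \<exists>(n::nat) (c::nat \<Rightarrow> 'k) x y. s = (\<lambda>w. \<Sum>i<n. c i * tcomm (x i) (y i) w)}"

text \<open>Closure in the (degree-filtration = product) topology: x is in the closure of S
  iff every basic neighbourhood x + prod_{m \<ge> N} V^{\<otimes>m} meets S.\<close>
definition tclosure :: "('i, 'k::comm_ring_1) ctensor set \<Rightarrow> ('i, 'k) ctensor set" where
  "tclosure S = {x. \<forall>N. \<exists>s\<in>S. \<forall>w. length w < N \<longrightarrow> x w = s w}"

text \<open>|x| = 0 in |T(V)| = T(V) / closure(span of commutators).\<close>
definition cyc_zero :: "('i, 'k::comm_ring_1) ctensor \<Rightarrow> bool" where
  "cyc_zero x \<longleftrightarrow> x \<in> tclosure comm_span"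

text \<open>Symplectic form on V given by its Gram matrix W i j = omega(e_i, e_j):
  alternating and nondegenerate.\<close>
definition symplectic_form :: "('i::finite \<Rightarrow> 'i \<Rightarrow> 'k::field) \<Rightarrow> bool" where
  "symplectic_form W \<longleftrightarrow>
     (\<forall>i. W i i = 0) \<and> (\<forall>i j. W i j = - W j i) \<and>
     (\<forall>v. (\<forall>u. (\<Sum>i\<in>UNIV. \<Sum>j\<in>UNIV. v i * W i j * u j) = 0) \<longrightarrow> (\<forall>i. v i = 0))"

text \<open>omega_0 = sum_{i,j} P i j e_i \<otimes> e_j represents the form W: P is the inverse
  matrix of W (the bivector corresponding to omega under V \<cong> V^* ).\<close>
definition represents :: "('i::finite \<Rightarrow> 'i \<Rightarrow> 'k::field) \<Rightarrow> ('i \<Rightarrow> 'i \<Rightarrow> 'k) \<Rightarrow> bool" where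
  "represents P W \<longleftrightarrow> (\<forall>i j. (\<Sum>k\<in>UNIV. P i k * W k j) = (if i = j then 1 else 0))"

definition bivector :: "('i \<Rightarrow> 'i \<Rightarrow> 'k::comm_ring_1) \<Rightarrow> ('i, 'k) ctensor" where
  "bivector P = (\<lambda>w. if length w = 2 then P (w ! 0) (w ! 1) else 0)"

end

theory Submission
  imports Defs
begin

definition hom :: "nat \<Rightarrow> ('i, 'k::comm_ring_1) ctensor \<Rightarrow> bool" where
  "hom n x \<longleftrightarrow> (\<forall>w. length w \<noteq> n \<longrightarrow> x w = 0)"

lemma homD: "hom n x \<Longrightarrow> length w \<noteq> n \<Longrightarrow> x w = 0"
  by (simp add: hom_def)

lemma tmul_hom:
  assumes "hom p x" "hom q y"
  shows "tmul x y w = (if length w = p + q then x (take p w) * y (drop p w) else 0)"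
proof -
  have "\<forall>k\<in>{..length w}. x (take k w) * y (drop k w) =
      (if k = p then (if length w = p + q then x (take p w) * y (drop p w) else 0) else 0)"
  proof
    fix k assume k: "k \<in> {..length w}"
    show "x (take k w) * y (drop k w) =
      (if k = p then (if length w = p + q then x (take p w) * y (drop p w) else 0) else 0)"
    proof (cases "k = p")
      case True
      then show ?thesis using k assms(2) by (auto simp: hom_def)
    next
      case False
      then have "length (take k w) \<noteq> p" using k by simp
      then show ?thesis using False assms(1) by (simp add: hom_def)
    qed
  qed
  then have "tmul x y w = (\<Sum>k\<in>{..length w}. (if k = p then (if length w = p + q then x (take p w) * y (drop p w) else 0) else 0))"
    unfolding tmul_def by (intro sum.cong refl) (use \<open>\<forall>k\<in>_. _\<close> in blast)
  also have "\<dots> = (if length w = p + q then x (take p w) * y (drop p w) else 0)"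
    by (subst sum.delta) auto
  finally show ?thesis .
qed

lemma hom_tmul: "hom p x \<Longrightarrow> hom q y \<Longrightarrow> hom (p + q) (tmul x y)"
  by (simp add: hom_def tmul_hom)

lemma tmul_assoc_hom:
  assumes "hom p x" "hom q y" "hom r z"
  shows "tmul (tmul x y) z = tmul x (tmul y z)"
proof
  fix w
  have e1: "tmul (tmul x y) z w = (if length w = p + q + r then x (take p w) * y (take q (drop p w)) * z (drop (p + q) w) else 0)"
    by (simp add: tmul_hom[OF hom_tmul[OF assms(1,2)] assms(3)] tmul_hom[OF assms(1,2)] take_take drop_take)
  have e2: "tmul x (tmul y z) w = (if length w = p + q + r then x (take p w) * y (take q (drop p w)) * z (drop (p + q) w) else 0)"
    by (simp add: tmul_hom[OF assms(1) hom_tmul[OF assms(2,3)]] tmul_hom[OF assms(2,3)] drop_drop mult.assoc add.assoc add.commute[of q p])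
  show "tmul (tmul x y) z w = tmul x (tmul y z) w" using e1 e2 by simp
qed

lemma tmul_sum_left: "tmul (\<lambda>w. \<Sum>i\<in>I. f i w) y = (\<lambda>w. \<Sum>i\<in>I. tmul (f i) y w)"
  unfolding tmul_def by (rule ext) (simp add: sum_distrib_right, rule sum.swap)

lemma tmul_sum_right: "tmul x (\<lambda>w. \<Sum>i\<in>I. f i w) = (\<lambda>w. \<Sum>i\<in>I. tmul x (f i) w)"
  unfolding tmul_def by (rule ext) (simp add: sum_distrib_left, rule sum.swap)

lemma tmul_scale_left: "tmul (\<lambda>w. c * x w) y = (\<lambda>w. c * tmul x y w)"
  unfolding tmul_def by (rule ext) (simp add: sum_distrib_left mult.assoc)

lemma tmul_scale_right: "tmul x (\<lambda>w. c * y w) = (\<lambda>w. c * tmul x y w)"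
  unfolding tmul_def by (rule ext) (simp add: sum_distrib_left mult.left_commute)

lemma tmul_diff_left: "tmul (\<lambda>w. x w - x' w) y = (\<lambda>w. tmul x y w - tmul x' y w)"
  unfolding tmul_def by (rule ext) (simp add: left_diff_distrib sum_subtractf)

lemma tmul_diff_right: "tmul x (\<lambda>w. y w - y' w) = (\<lambda>w. tmul x y w - tmul x y' w)"
  unfolding tmul_def by (rule ext) (simp add: right_diff_distrib sum_subtractf)

lemma tmul_add_left: "tmul (\<lambda>w. x w + x' w) y = (\<lambda>w. tmul x y w + tmul x' y w)"
  unfolding tmul_def by (rule ext) (simp add: distrib_right sum.distrib)

lemma tmul_add_right: "tmul x (\<lambda>w. y w + y' w) = (\<lambda>w. tmul x y w + tmul x y' w)"
  unfolding tmul_def by (rule ext) (simp add: distrib_left sum.distrib)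

lemma tmul_zero_left: "tmul (\<lambda>w. 0) y = (\<lambda>w. 0)"
  unfolding tmul_def by simp

lemma tmul_zero_right: "tmul x (\<lambda>w. 0) = (\<lambda>w. 0)"
  unfolding tmul_def by simp

lemma hom_tone: "hom 0 tone" by (simp add: hom_def tone_def)

lemma tmul_tone_left: "tmul tone y = y"
proof
  fix w
  have "tmul tone y w = (\<Sum>k\<in>{..length w}. if k = 0 then y w else 0)"
    unfolding tmul_def tone_def by (rule sum.cong) auto
  then show "tmul tone y w = y w" by simp
qed

lemma tmul_tone_right: "tmul x tone = x"
proof
  fix w
  have "tmul x tone w = (\<Sum>k\<in>{..length w}. if k = length w then x w else 0)"
    unfolding tmul_def tone_def by (rule sum.cong) auto
  then show "tmul x tone w = x w" by simp
qed

fun wt :: "'i option list \<Rightarrow> nat" where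
  "wt [] = 0"
| "wt (Some c # C) = Suc (wt C)"
| "wt (None # C) = Suc (Suc (wt C))"

fun pe :: "('i \<Rightarrow> 'i \<Rightarrow> 'k::comm_ring_1) \<Rightarrow> 'i option list \<Rightarrow> 'i list \<Rightarrow> 'k" where
  "pe P [] w = (if w = [] then 1 else 0)"
| "pe P (Some c # C) w = (case w of [] \<Rightarrow> 0 | x # w' \<Rightarrow> if x = c then pe P C w' else 0)"
| "pe P (None # C) w = (case w of x # y # w' \<Rightarrow> P x y * pe P C w' | _ \<Rightarrow> 0)"

lemma wt_append[simp]: "wt (C1 @ C2) = wt C1 + wt C2"
  by (induction C1 rule: wt.induct) auto

lemma wt_replicate_None[simp]: "wt (replicate l None) = 2 * l"
  by (induction l) auto

lemma wt_map_Some[simp]: "wt (map Some u) = length u"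
  by (induction u) auto

lemma pe_len: "length w \<noteq> wt C \<Longrightarrow> pe P C w = 0"
proof (induction C arbitrary: w rule: wt.induct)
  case 1 then show ?case by simp
next
  case (2 c C) then show ?case by (cases w) auto
next
  case (3 C) then show ?case
    by (cases w rule: remdups_adj.cases) auto
qed

lemma hom_pe: "hom (wt C) (pe P C)"
  by (simp add: hom_def pe_len)

lemma pe_append:
  "pe P (C1 @ C2) w = (if length w = wt C1 + wt C2 then pe P C1 (take (wt C1) w) * pe P C2 (drop (wt C1) w) else 0)"
proof (induction C1 arbitrary: w rule: wt.induct)
  case 1 then show ?case by (auto simp: pe_len)
next
  case (2 c C) then show ?case by (cases w) auto
next
  case (3 C) then show ?case
    by (cases w rule: remdups_adj.cases) (auto simp: mult.assoc)
qed

lemma pe_append_tmul: "pe P (C1 @ C2) = tmul (pe P C1) (pe P C2)"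
  by (rule ext) (simp add: pe_append tmul_hom[OF hom_pe hom_pe])

lemma pe_Nil: "pe P [] = tone"
  by (rule ext) (simp add: tone_def)

lemma pe_None: "pe P [None] = bivector P"
proof
  fix w show "pe P [None] w = bivector P w"
    by (cases w rule: remdups_adj.cases) (auto simp: bivector_def)
qed

lemma tpow_pe: "tpow (bivector P) l = pe P (replicate l None)"
proof (induction l)
  case 0 then show ?case by (simp add: pe_Nil)
next
  case (Suc l)
  have "tpow (bivector P) (Suc l) = tmul (pe P [None]) (pe P (replicate l None))"
    by (simp add: Suc pe_None)
  also have "\<dots> = pe P ([None] @ replicate l None)" by (simp only: pe_append_tmul)
  finally show ?case by simp
qed

definition ev :: "'i list \<Rightarrow> ('i, 'k::comm_ring_1) ctensor" where
  "ev u = (\<lambda>w. if w = u then 1 else 0)"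

lemma ev_pe: "ev u = pe P (map Some u)"
proof
  fix w show "ev u w = pe P (map Some u) w"
  proof (induction u arbitrary: w)
    case Nil then show ?case by (simp add: ev_def)
  next
    case (Cons c u) then show ?case by (cases w) (auto simp: ev_def)
  qed
qed

lemma hom_ev: "hom (length u) (ev u)"
  by (simp add: hom_def ev_def)

definition Cyc :: "('i, 'k::comm_ring_1) ctensor \<Rightarrow> ('i, 'k) ctensor" where
  "Cyc y w = (\<Sum>r<length w. y (rotate r w))"

lemma rotate_take_drop_aux:
  assumes "k \<le> length xs"
  shows "take (length xs - k) (rotate k xs) = drop k xs \<and> drop (length xs - k) (rotate k xs) = take k xs"
proof (cases "k = length xs")
  case True then show ?thesis by simp
next
  case False
  then have k: "k < length xs" using assms by simp
  then have "rotate k xs = drop k xs @ take k xs" by (simp add: rotate_drop_take)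
  then show ?thesis using k by simp
qed

lemma Cyc_tmul_swap:
  fixes u v :: "('i, 'k::comm_ring_1) ctensor"
  shows "Cyc (tmul u v) = Cyc (tmul v u)"
proof
  fix w :: "'i list"
  define N where "N = length w"
  show "Cyc (tmul u v) w = Cyc (tmul v u) w"
  proof (cases "N = 0")
    case True then show ?thesis by (simp add: Cyc_def N_def)
  next
    case False
    then have Npos: "0 < N" by simp
    define g where "g = (\<lambda>(r::nat, k::nat). u (take k (rotate r w)) * v (drop k (rotate r w)))"
    define h where "h = (\<lambda>(r::nat, k::nat). v (take k (rotate r w)) * u (drop k (rotate r w)))"
    define \<phi> where "\<phi> = (\<lambda>(r::nat, k::nat). ((r + k) mod N, N - k))"
    have L: "Cyc (tmul u v) w = sum g ({..<N} \<times> {..N})"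
      unfolding Cyc_def tmul_def g_def N_def by (simp add: sum.cartesian_product)
    have R: "Cyc (tmul v u) w = sum h ({..<N} \<times> {..N})"
      unfolding Cyc_def tmul_def h_def N_def by (simp add: sum.cartesian_product)
    have inv: "\<phi> (\<phi> p) = p" if "p \<in> {..<N} \<times> {..N}" for p
    proof -
      obtain r k where p0: "p = (r, k)" by (cases p)
      then have p: "p = (r, k)" "r < N" "k \<le> N" using that by auto
      have "((r + k) mod N + (N - k)) mod N = (r + k + (N - k)) mod N" by (simp add: mod_add_left_eq)
      also have "\<dots> = (r + N) mod N" using p by simp
      also have "\<dots> = r" using p by simp
      finally show ?thesis using p by (simp add: \<phi>_def)
    qed
    have mem: "\<phi> p \<in> {..<N} \<times> {..N}" if "p \<in> {..<N} \<times> {..N}" for p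
      using that Npos by (auto simp: \<phi>_def)
    have val: "h (\<phi> p) = g p" if "p \<in> {..<N} \<times> {..N}" for p
    proof -
      obtain r k where p0: "p = (r, k)" by (cases p)
      then have p: "p = (r, k)" "r < N" "k \<le> N" using that by auto
      define w' where "w' = rotate r w"
      have lw': "length w' = N" by (simp add: w'_def N_def)
      have "rotate ((r + k) mod N) w = rotate (r + k) w"
        by (metis N_def rotate_conv_mod)
      also have "\<dots> = rotate k w'" by (simp add: w'_def rotate_rotate add.commute)
      finally have rr: "rotate ((r + k) mod N) w = rotate k w'" .
      have aux: "take (N - k) (rotate k w') = drop k w'" "drop (N - k) (rotate k w') = take k w'"
        using rotate_take_drop_aux[of k w'] p lw' by auto
      show ?thesis using p by (simp add: \<phi>_def h_def g_def rr aux w'_def[symmetric] mult.commute)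
    qed
    have "sum g ({..<N} \<times> {..N}) = sum h ({..<N} \<times> {..N})"
      by (rule sum.reindex_bij_witness[where i=\<phi> and j=\<phi>]) (auto simp: inv mem val)
    then show ?thesis using L R by simp
  qed
qed

lemma Cyc_diff: "Cyc (\<lambda>w. f w - g w) = (\<lambda>w. Cyc f w - Cyc g w)"
  by (rule ext) (simp add: Cyc_def sum_subtractf)

lemma Cyc_tcomm: "Cyc (tcomm u v) = (\<lambda>w. 0)"
proof -
  have "Cyc (tcomm u v) = (\<lambda>w. Cyc (tmul u v) w - Cyc (tmul v u) w)"
    unfolding tcomm_def by (rule Cyc_diff)
  then show ?thesis by (simp add: Cyc_tmul_swap)
qed

lemma Cyc_comm_span:
  fixes s :: "('i, 'k::comm_ring_1) ctensor"
  shows "s \<in> comm_span \<Longrightarrow> Cyc s w = 0"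
proof -
  assume "s \<in> comm_span"
  then obtain n and c :: "nat \<Rightarrow> 'k" and x y :: "nat \<Rightarrow> ('i, 'k) ctensor" where s: "s = (\<lambda>w. \<Sum>i<n. c i * tcomm (x i) (y i) w)"
    unfolding comm_span_def mem_Collect_eq by blast
  have "Cyc s w = (\<Sum>i<n. c i * Cyc (tcomm (x i) (y i)) w)"
    unfolding s Cyc_def by (simp add: sum_distrib_left, rule sum.swap)
  also have "\<dots> = 0" by (simp add: Cyc_tcomm)
  finally show ?thesis .
qed

lemma Cyc_cyc_zero: "cyc_zero x \<Longrightarrow> Cyc x w = 0"
proof -
  assume "cyc_zero x"
  then obtain s where s: "s \<in> comm_span" "\<forall>v. length v < Suc (length w) \<longrightarrow> x v = s v"
    unfolding cyc_zero_def tclosure_def by blast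
  have "Cyc x w = Cyc s w" unfolding Cyc_def using s(2) by (intro sum.cong) auto
  then show ?thesis using Cyc_comm_span[OF s(1)] by simp
qed

definition Words :: "nat \<Rightarrow> 'i list set" where
  "Words k = {w. length w = k}"

lemma finite_Words: "finite (Words k :: ('i::finite) list set)"
proof -
  have "Words k = {xs :: 'i list. set xs \<subseteq> UNIV \<and> length xs = k}" by (auto simp: Words_def)
  then show ?thesis using finite_lists_length_eq[of "UNIV :: 'i set" k] by simp
qed

lemma tmul_app:
  assumes "hom p A" "hom q B" "length u = p"
  shows "tmul A B (u @ v) = A u * B v"
proof (cases "length v = q")
  case True then show ?thesis using assms by (simp add: tmul_hom)
next
  case False then show ?thesis using assms by (simp add: tmul_hom homD[OF assms(2)])
qed

lemma tmul3_app:
  assumes "hom p A" "hom n X" "hom q B" "length u1 = p" "length u2 = n"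
  shows "tmul (tmul A X) B (u1 @ u2 @ u3) = A u1 * X u2 * B u3"
proof -
  have "tmul (tmul A X) B ((u1 @ u2) @ u3) = tmul A X (u1 @ u2) * B u3"
    by (rule tmul_app[OF hom_tmul[OF assms(1,2)] assms(3)]) (simp add: assms)
  also have "tmul A X (u1 @ u2) = A u1 * X u2" by (rule tmul_app[OF assms(1,2,4)])
  finally show ?thesis by simp
qed

lemma pe_app: "length u = wt A \<Longrightarrow> pe P (A @ B) (u @ v) = pe P A u * pe P B v"
  by (cases "length v = wt B") (auto simp: pe_append pe_len)

lemma sum_even_odd:
  fixes F :: "nat \<Rightarrow> 'a::comm_monoid_add" and l :: nat
  shows "(\<Sum>r\<le>2*l. F r) = (\<Sum>i\<le>l. F (2*i)) + (\<Sum>j<l. F (2*j+1))"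
proof (induction l)
  case 0 then show ?case by simp
next
  case (Suc l)
  have "{..2 * Suc l} = insert (2*l+2) (insert (2*l+1) {..2*l})" by auto
  then have "(\<Sum>r\<le>2 * Suc l. F r) = F (2*l+2) + F (2*l+1) + (\<Sum>r\<le>2*l. F r)" by (simp add: add.assoc)
  then show ?case using Suc by (simp add: add_ac)
qed

lemma pe_Some_Cons: "pe P (Some c # C) (p # u) = (if p = c then pe P C u else 0)"
  by simp

lemma pe_None_Cons: "pe P (None # C) (p # q # u) = P p q * pe P C u"
  by simp

lemma pe_snoc_Some: "pe P (C @ [Some c]) (u @ [p]) = (if p = c then pe P C u else 0)"
proof (cases "length u = wt C")
  case True then show ?thesis by (simp add: pe_app)
next
  case False then show ?thesis by (auto simp: pe_append pe_len)
qed

lemma sum_sum_delta2: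
  assumes "finite A" "finite B" "a0 \<in> A" "b0 \<in> B"
  shows "(\<Sum>a\<in>A. \<Sum>b\<in>B. if a = a0 \<and> b = b0 then c else 0) = c"
proof -
  have "(\<Sum>a\<in>A. \<Sum>b\<in>B. if a = a0 \<and> b = b0 then c else 0) = (\<Sum>a\<in>A. if a = a0 then c else 0)"
  proof (rule sum.cong[OF refl])
    fix a assume "a \<in> A"
    have "(\<Sum>b\<in>B. if a = a0 \<and> b = b0 then c else 0) = (\<Sum>b\<in>B. if b = b0 then (if a = a0 then c else 0) else 0)"
      by (rule sum.cong) auto
    also have "\<dots> = (if a = a0 then c else 0)" using assms by (subst sum.delta) auto
    finally show "(\<Sum>b\<in>B. if a = a0 \<and> b = b0 then c else 0) = (if a = a0 then c else 0)" .
  qed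
  also have "\<dots> = c" using assms by (subst sum.delta) auto
  finally show ?thesis .
qed

lemma Cyc_decomp:
  fixes x :: "('i::finite, 'k::comm_ring_1) ctensor"
  assumes hx: "hom n x" and n1: "1 \<le> n"
  shows "Cyc (tmul x (pe P (replicate l None))) w =
    (\<Sum>i\<le>l. tmul (tmul (pe P (replicate i None)) x) (pe P (replicate (l-i) None)) w)
  + (\<Sum>j<l. \<Sum>x'\<in>UNIV. \<Sum>y'\<in>UNIV. P x' y' *
        tmul (tmul (pe P (Some y' # replicate j None)) x) (pe P (replicate (l-1-j) None @ [Some x'])) w)
  + (\<Sum>r\<in>{2*l<..<n+2*l}. \<Sum>\<alpha>\<in>Words (r-2*l). \<Sum>\<beta>\<in>Words (n+2*l-r).
        x (\<beta> @ \<alpha>) * tmul (tmul (ev \<alpha>) (pe P (replicate l None))) (ev \<beta>) w)"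
proof -
  define N where "N = n + 2*l"
  have hz: "\<And>k. hom (2*k) (pe P (replicate k None))" by (metis hom_pe wt_replicate_None)
  have hxz: "hom N (tmul x (pe P (replicate l None)))" unfolding N_def by (rule hom_tmul[OF hx hz])
  show ?thesis
  proof (cases "length w = N")
    case False
    have L: "Cyc (tmul x (pe P (replicate l None))) w = 0"
      unfolding Cyc_def using False by (intro sum.neutral) (auto intro: homD[OF hxz])
    have E: "tmul (tmul (pe P (replicate i None)) x) (pe P (replicate (l-i) None)) w = 0" if "i \<le> l" for i
    proof -
      have "hom (2*i + n + 2*(l-i)) (tmul (tmul (pe P (replicate i None)) x) (pe P (replicate (l-i) None)))"
        by (intro hom_tmul hz hx)
      moreover have "2*i + n + 2*(l-i) = N" using that by (simp add: N_def)
      ultimately show ?thesis using False by (simp add: homD)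
    qed
    have O: "tmul (tmul (pe P (Some y' # replicate j None)) x) (pe P (replicate (l-1-j) None @ [Some x'])) w = 0"
      if "j < l" for j x' y'
    proof -
      have "hom (wt (Some y' # replicate j None) + n + wt (replicate (l-1-j) None @ [Some x']))
          (tmul (tmul (pe P (Some y' # replicate j None)) x) (pe P (replicate (l-1-j) None @ [Some x'])))"
        by (intro hom_tmul hom_pe hx)
      moreover have "wt (Some y' # replicate j None) + n + wt (replicate (l-1-j) None @ [Some x']) = N"
        using that by (simp add: N_def)
      ultimately show ?thesis using False by (simp add: homD)
    qed
    have T: "tmul (tmul (ev \<alpha>) (pe P (replicate l None))) (ev \<beta>) w = 0"
      if "r \<in> {2*l<..<n+2*l}" "\<alpha> \<in> Words (r-2*l)" "\<beta> \<in> Words (n+2*l-r)" for r \<alpha> \<beta>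
    proof -
      have "hom (length \<alpha> + 2*l + length \<beta>) (tmul (tmul (ev \<alpha>) (pe P (replicate l None))) (ev \<beta>))"
        by (intro hom_tmul hom_ev hz)
      moreover have "length \<alpha> + 2*l + length \<beta> = N" using that by (auto simp: Words_def N_def)
      ultimately show ?thesis using False by (simp add: homD)
    qed
    show ?thesis using L E O T by simp
  next
    case True
    define F where "F r = tmul x (pe P (replicate l None)) (rotate r w)" for r
    have "Cyc (tmul x (pe P (replicate l None))) w = (\<Sum>r<N. F r)"
      unfolding Cyc_def F_def using True by simp
    also have "{..<N} = {..2*l} \<union> {2*l<..<n+2*l}" using n1 by (auto simp: N_def)
    also have "(\<Sum>r\<in>{..2*l} \<union> {2*l<..<n+2*l}. F r) = (\<Sum>r\<le>2*l. F r) + (\<Sum>r\<in>{2*l<..<n+2*l}. F r)"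
      by (rule sum.union_disjoint) auto
    also have "(\<Sum>r\<le>2*l. F r) = (\<Sum>i\<le>l. F (2*i)) + (\<Sum>j<l. F (2*j+1))" by (rule sum_even_odd)
    finally have main: "Cyc (tmul x (pe P (replicate l None))) w =
        (\<Sum>i\<le>l. F (2*i)) + (\<Sum>j<l. F (2*j+1)) + (\<Sum>r\<in>{2*l<..<n+2*l}. F r)" .
    have FE: "F (2*i) = tmul (tmul (pe P (replicate i None)) x) (pe P (replicate (l-i) None)) w" if "i \<le> l" for i
    proof -
      define u1 u2 u3 where "u1 = take (2*i) w" and "u2 = take n (drop (2*i) w)" and "u3 = drop (2*i+n) w"
      have w: "w = u1 @ u2 @ u3" unfolding u1_def u2_def u3_def
        by (metis append_take_drop_id drop_drop add.commute)
      have l1: "length u1 = 2*i" and l2: "length u2 = n" and l3: "length u3 = 2*(l-i)"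
        using True that by (auto simp: u1_def u2_def u3_def N_def)
      have rot: "rotate (2*i) w = u2 @ u3 @ u1"
        using rotate_append[of u1 "u2 @ u3"] l1 w by simp
      have "F (2*i) = x u2 * pe P (replicate l None) (u3 @ u1)"
        unfolding F_def rot using tmul_app[OF hx hz, where u=u2 and v="u3 @ u1"] l2 by simp
      also have "replicate l None = replicate (l-i) None @ replicate i (None :: 'i option)"
        using that by (simp add: replicate_add[symmetric])
      also have "pe P (replicate (l-i) None @ replicate i None) (u3 @ u1) =
          pe P (replicate (l-i) None) u3 * pe P (replicate i None) u1"
        by (rule pe_app) (simp add: l3)
      also have "tmul (tmul (pe P (replicate i None)) x) (pe P (replicate (l-i) None)) w =
          pe P (replicate i None) u1 * x u2 * pe P (replicate (l-i) None) u3"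
        unfolding w by (rule tmul3_app[OF hz hx hz l1 l2])
      ultimately show ?thesis by (simp add: ac_simps)
    qed
    have FO: "F (2*j+1) = (\<Sum>x'\<in>UNIV. \<Sum>y'\<in>UNIV. P x' y' *
        tmul (tmul (pe P (Some y' # replicate j None)) x) (pe P (replicate (l-1-j) None @ [Some x'])) w)"
      if "j < l" for j
    proof -
      define m where "m = l - 1 - j"
      have lm: "l = m + 1 + j" using that by (simp add: m_def)
      define u1 u2 u3 where "u1 = take (2*j+1) w" and "u2 = take n (drop (2*j+1) w)" and "u3 = drop (2*j+1+n) w"
      have w: "w = u1 @ u2 @ u3" unfolding u1_def u2_def u3_def
        by (metis append_take_drop_id drop_drop add.commute)
      have l1: "length u1 = 2*j+1" and l2: "length u2 = n" and l3: "length u3 = 2*m+1"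
        using True that by (auto simp: u1_def u2_def u3_def N_def m_def)
      obtain p0 u1' where u1: "u1 = p0 # u1'" using l1 by (cases u1) auto
      obtain u3' q0 where u3: "u3 = u3' @ [q0]" using l3 by (cases u3 rule: rev_cases) auto
      have l1': "length u1' = 2*j" and l3': "length u3' = 2*m" using l1 l3 u1 u3 by auto
      have rot: "rotate (2*j+1) w = u2 @ u3 @ u1"
        using rotate_append[of u1 "u2 @ u3"] l1 w by simp
      have "F (2*j+1) = x u2 * pe P (replicate l None) (u3 @ u1)"
        unfolding F_def rot using tmul_app[OF hx hz, where u=u2 and v="u3 @ u1"] l2 by simp
      also have "replicate l None = replicate m None @ (None # replicate j (None :: 'i option))"
        using lm by (simp add: replicate_add[symmetric] replicate_app_Cons_same)
      also have "u3 @ u1 = u3' @ (q0 # p0 # u1')" using u1 u3 by simp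
      also have "pe P (replicate m None @ (None # replicate j None)) (u3' @ (q0 # p0 # u1')) =
          pe P (replicate m None) u3' * (P q0 p0 * pe P (replicate j None) u1')"
        by (simp add: pe_app l3')
      finally have F1: "F (2*j+1) = x u2 * (pe P (replicate m None) u3' * (P q0 p0 * pe P (replicate j None) u1'))" .
      have R: "tmul (tmul (pe P (Some y' # replicate j None)) x) (pe P (replicate (l-1-j) None @ [Some x'])) w =
          (if p0 = y' then pe P (replicate j None) u1' else 0) * x u2 * (if q0 = x' then pe P (replicate m None) u3' else 0)"
        for x' y'
      proof -
        have "tmul (tmul (pe P (Some y' # replicate j None)) x) (pe P (replicate (l-1-j) None @ [Some x'])) w =
            pe P (Some y' # replicate j None) u1 * x u2 * pe P (replicate m None @ [Some x']) u3"
          unfolding w m_def by (rule tmul3_app[OF hom_pe hx hom_pe]) (auto simp: l1 l2)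
        then show ?thesis by (simp add: u1 u3 pe_snoc_Some)
      qed
      define K where "K = pe P (replicate j None) u1' * x u2 * pe P (replicate m None) u3'"
      have inner: "(\<Sum>y'\<in>UNIV. P x' y' *
          tmul (tmul (pe P (Some y' # replicate j None)) x) (pe P (replicate (l-1-j) None @ [Some x'])) w) =
          (if x' = q0 then P q0 p0 * K else 0)" for x'
      proof -
        have "(\<Sum>y'\<in>UNIV. P x' y' *
          tmul (tmul (pe P (Some y' # replicate j None)) x) (pe P (replicate (l-1-j) None @ [Some x'])) w) =
          (\<Sum>y'\<in>UNIV. if y' = p0 then (if x' = q0 then P q0 p0 * K else 0) else 0)"
          by (intro sum.cong refl, unfold R) (auto simp: K_def)
        also have "\<dots> = (if x' = q0 then P q0 p0 * K else 0)" by (subst sum.delta) auto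
        finally show ?thesis .
      qed
      have "(\<Sum>x'\<in>UNIV. \<Sum>y'\<in>UNIV. P x' y' *
          tmul (tmul (pe P (Some y' # replicate j None)) x) (pe P (replicate (l-1-j) None @ [Some x'])) w) =
          (\<Sum>x'\<in>UNIV. if x' = q0 then P q0 p0 * K else 0)"
        by (simp only: inner)
      also have "\<dots> = P q0 p0 * K" by (subst sum.delta) auto
      finally have "(\<Sum>x'\<in>UNIV. \<Sum>y'\<in>UNIV. P x' y' *
          tmul (tmul (pe P (Some y' # replicate j None)) x) (pe P (replicate (l-1-j) None @ [Some x'])) w) =
          P q0 p0 * K" .
      then show ?thesis using F1 by (simp add: K_def ac_simps)
    qed
    have FT: "F r = (\<Sum>\<alpha>\<in>Words (r-2*l). \<Sum>\<beta>\<in>Words (n+2*l-r).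
        x (\<beta> @ \<alpha>) * tmul (tmul (ev \<alpha>) (pe P (replicate l None))) (ev \<beta>) w)"
      if r: "r \<in> {2*l<..<n+2*l}" for r
    proof -
      define u1 u2 u3 where "u1 = take (r-2*l) w" and "u2 = take (2*l) (drop (r-2*l) w)" and "u3 = drop r w"
      have rr: "r - 2*l + 2*l = r" using r by auto
      have d: "drop r w = drop (2*l) (drop (r-2*l) w)" using rr by (simp add: drop_drop add.commute)
      have w: "w = u1 @ u2 @ u3" unfolding u1_def u2_def u3_def d
        by (simp only: append_take_drop_id)
      have l1: "length u1 = r - 2*l" and l2: "length u2 = 2*l" and l3: "length u3 = n + 2*l - r"
        using True r by (auto simp: u1_def u2_def u3_def N_def)
      have rot: "rotate r w = u3 @ u1 @ u2"
        using rotate_append[of "u1 @ u2" u3] l1 l2 w rr by simp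
      have Fr: "F r = x (u3 @ u1) * pe P (replicate l None) u2"
        unfolding F_def rot using tmul_app[OF hx hz, where u="u3 @ u1" and v=u2] l1 l3 r by auto
      moreover have "tmul (tmul (ev \<alpha>) (pe P (replicate l None))) (ev \<beta>) w =
          (if \<alpha> = u1 \<and> \<beta> = u3 then pe P (replicate l None) u2 else 0)"
        if "\<alpha> \<in> Words (r-2*l)" for \<alpha> \<beta>
      proof -
        have "tmul (tmul (ev \<alpha>) (pe P (replicate l None))) (ev \<beta>) w = ev \<alpha> u1 * pe P (replicate l None) u2 * ev \<beta> u3"
          unfolding w by (rule tmul3_app[OF hom_ev hz hom_ev]) (use that l1 l2 in \<open>auto simp: Words_def\<close>)
        then show ?thesis by (simp add: ev_def)
      qed
      ultimately have "(\<Sum>\<alpha>\<in>Words (r-2*l). \<Sum>\<beta>\<in>Words (n+2*l-r).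
        x (\<beta> @ \<alpha>) * tmul (tmul (ev \<alpha>) (pe P (replicate l None))) (ev \<beta>) w) =
        (\<Sum>\<alpha>\<in>Words (r-2*l). \<Sum>\<beta>\<in>Words (n+2*l-r). if \<alpha> = u1 \<and> \<beta> = u3 then x (u3 @ u1) * pe P (replicate l None) u2 else 0)"
        by (intro sum.cong refl) auto
      also have "\<dots> = x (u3 @ u1) * pe P (replicate l None) u2"
        by (rule sum_sum_delta2) (use l1 l3 finite_Words in \<open>auto simp: Words_def\<close>)
      finally show ?thesis using Fr by simp
    qed
    show ?thesis unfolding main using FE FO FT by simp
  qed
qed

locale zb =
  fixes P :: "'i::finite \<Rightarrow> 'i \<Rightarrow> 'k::field_char_0" and a b :: 'i
  assumes antisym: "\<And>x y. P x y = - P y x" and Pab: "P a b \<noteq> 0" and ab: "a \<noteq> b"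
begin

lemma Pdiag: "P x x = 0"
  using antisym[of x x] by simp

fun normal :: "'i option list \<Rightarrow> bool" where
  "normal [] = True"
| "normal [s] = True"
| "normal (s # t # C) = (\<not> (s = Some a \<and> t = Some b) \<and> normal (t # C))"

fun lead :: "'i option list \<Rightarrow> 'i list" where
  "lead [] = []"
| "lead (Some c # C) = c # lead C"
| "lead (None # C) = a # b # lead C"

fun sig0 :: "'i list \<Rightarrow> 'i option list" where
  "sig0 [] = []"
| "sig0 [x] = [Some x]"
| "sig0 (x # y # w) = (if x = a \<and> y = b then None # sig0 w else Some x # sig0 (y # w))"

definition g :: "'i \<Rightarrow> nat" where
  "g x = (if x = a then 2 else if x = b then 1 else 0)"

fun fm :: "'i list \<Rightarrow> nat" where
  "fm [] = 0"
| "fm (x # w) = g x * 3 ^ length w + fm w"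

lemma length_lead[simp]: "length (lead C) = wt C"
  by (induction C rule: lead.induct) auto

lemma lead_sig0[simp]: "lead (sig0 w) = w"
  by (induction w rule: sig0.induct) auto

lemma wt_sig0[simp]: "wt (sig0 w) = length w"
  by (induction w rule: sig0.induct) auto

lemma sig0_hd: "sig0 (x # w) = Some y # C \<Longrightarrow> x = y"
  by (cases w) (auto split: if_splits)

lemma normal_sig0: "normal (sig0 w)"
proof (induction w rule: sig0.induct)
  case 1 then show ?case by simp
next
  case (2 x) then show ?case by simp
next
  case (3 x y w)
  show ?case
  proof (cases "x = a \<and> y = b")
    case True
    then show ?thesis using 3 by (cases "sig0 w") auto
  next
    case False
    then have e: "sig0 (x # y # w) = Some x # sig0 (y # w)" by simp
    have "sig0 (y # w) \<noteq> []" by (cases w) auto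
    then obtain s C where sC: "sig0 (y # w) = s # C" by (cases "sig0 (y # w)") auto
    have "s = Some b \<Longrightarrow> y = b" using sC sig0_hd by blast
    then have "\<not> (Some x = Some a \<and> s = Some b)" using False by auto
    then show ?thesis using e sC 3(2)[OF False] by simp
  qed
qed

lemma lead_Nil_iff: "lead C = [] \<longleftrightarrow> C = []"
  by (cases C rule: lead.cases) auto

lemma sig0_lead: "normal C \<Longrightarrow> sig0 (lead C) = C"
proof (induction C rule: lead.induct)
  case 1 then show ?case by simp
next
  case (2 c C)
  then have nC: "normal C" by (cases C) auto
  show ?case
  proof (cases "lead C")
    case Nil
    then have "C = []" using lead_Nil_iff by auto
    then show ?thesis by simp
  next
    case (Cons y rest)
    have "\<not> (c = a \<and> y = b)"
    proof
      assume cy: "c = a \<and> y = b"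
      obtain s C' where C: "C = s # C'" using Cons by (cases C) auto
      show False
      proof (cases s)
        case None then show False using C Cons cy ab by auto
      next
        case (Some d)
        then have "d = b" using C Cons cy by auto
        then show False using 2(2) C Some cy by simp
      qed
    qed
    then have "sig0 (lead (Some c # C)) = Some c # sig0 (lead C)" using Cons by simp
    then show ?thesis using 2(1)[OF nC] by simp
  qed
next
  case (3 C)
  then have nC: "normal C" by (cases C) auto
  show ?case using 3(1)[OF nC] by simp
qed

lemma fm_bound: "fm w < 3 ^ length w"
proof (induction w)
  case Nil then show ?case by simp
next
  case (Cons x w)
  have "g x \<le> 2" by (simp add: g_def)
  then have h1: "g x * 3 ^ length w \<le> 2 * 3 ^ length w" by simp
  have h2: "fm (x # w) = g x * 3 ^ length w + fm w" by simp
  have h3: "(3::nat) ^ length (x # w) = 3 * 3 ^ length w" by simp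
  show ?case using Cons h1 h2 h3 by linarith
qed

lemma pe_lead: "pe P C (lead C) \<noteq> 0"
  by (induction C rule: lead.induct) (auto simp: Pab)

lemma pe_tri: "pe P C v \<noteq> 0 \<Longrightarrow> v = lead C \<or> fm v < fm (lead C)"
proof (induction C arbitrary: v rule: lead.induct)
  case 1 then show ?case by (auto split: if_splits)
next
  case (2 c C)
  then obtain v' where v: "v = c # v'" and nz: "pe P C v' \<noteq> 0"
    by (cases v) (auto split: if_splits)
  have len: "length v' = length (lead C)" using nz pe_len by fastforce
  from 2(1)[OF nz] show ?case
  proof
    assume "v' = lead C" then show ?thesis using v by simp
  next
    assume "fm v' < fm (lead C)" then show ?thesis using v len by simp
  qed
next
  case (3 C)
  then obtain x y v' where v: "v = x # y # v'" and Pxy: "P x y \<noteq> 0" and nz: "pe P C v' \<noteq> 0"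
    by (cases v rule: remdups_adj.cases) auto
  have len: "length v' = length (lead C)" using nz pe_len by fastforce
  show ?case
  proof (cases "x = a \<and> y = b")
    case True
    from 3(1)[OF nz] show ?thesis
    proof
      assume "v' = lead C" then show ?thesis using v True by simp
    next
      assume "fm v' < fm (lead C)" then show ?thesis using v len True by simp
    qed
  next
    case False
    define L where "L = length v'"
    have gxy: "3 * g x + g y \<le> 6"
    proof -
      have "x = a \<Longrightarrow> y \<noteq> a" using Pxy Pdiag by auto
      then show ?thesis using False ab by (auto simp: g_def)
    qed
    have "fm v = g x * 3 ^ (Suc L) + g y * 3 ^ L + fm v'" using v by (simp add: L_def)
    also have "\<dots> = (3 * g x + g y) * 3 ^ L + fm v'" by (simp add: algebra_simps)
    also have "\<dots> < (3 * g x + g y) * 3 ^ L + 3 ^ L" using fm_bound[of v'] by (simp add: L_def)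
    also have "\<dots> \<le> 7 * 3 ^ L" using gxy by simp
    also have "\<dots> \<le> fm (lead (None # C))" using len ab by (simp add: L_def g_def)
    finally show ?thesis by simp
  qed
qed

end

context zb begin

lemma finW: "finite (Words k :: 'i list set)"
  by (rule finite_Words)

lemma normal_Cons: "normal (s # C) \<longleftrightarrow> normal C \<and> \<not> (s = Some a \<and> C \<noteq> [] \<and> hd C = Some b)"
  by (cases C) auto

lemma normal_append:
  "normal (B @ C) \<longleftrightarrow> normal B \<and> normal C \<and> \<not> (B \<noteq> [] \<and> C \<noteq> [] \<and> last B = Some a \<and> hd C = Some b)"
proof (induction B)
  case Nil then show ?case by simp
next
  case (Cons s B)
  show ?case
  proof (cases B)
    case Nil then show ?thesis by (simp add: normal_Cons)
  next
    case (Cons t B') then show ?thesis using Cons.IH by (auto simp: normal_Cons)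
  qed
qed

definition NW :: "nat \<Rightarrow> 'i option list set" where
  "NW n = {C. normal C \<and> wt C = n}"

lemma length_le_wt: "length C \<le> wt C"
  by (induction C rule: wt.induct) auto

lemma finite_NW: "finite (NW n)"
proof -
  have "NW n \<subseteq> {C :: 'i option list. set C \<subseteq> UNIV \<and> length C \<le> n}"
    using length_le_wt by (auto simp: NW_def intro: order_trans)
  moreover have "finite {C :: 'i option list. set C \<subseteq> UNIV \<and> length C \<le> n}"
    by (rule finite_lists_length_le) simp
  ultimately show ?thesis by (rule finite_subset)
qed

definition lc :: "nat \<Rightarrow> ('i option list \<Rightarrow> 'k) \<Rightarrow> ('i, 'k) ctensor" where
  "lc n \<gamma> = (\<lambda>w. \<Sum>C\<in>NW n. \<gamma> C * pe P C w)"

lemma hom_lc: "hom n (lc n \<gamma>)"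
  unfolding hom_def lc_def NW_def by (auto intro!: sum.neutral simp: pe_len)

lemma lc_lin: "lc n (\<lambda>C. c * \<gamma>1 C + \<gamma>2 C) = (\<lambda>w. c * lc n \<gamma>1 w + lc n \<gamma>2 w)"
  unfolding lc_def by (rule ext) (simp add: distrib_right sum.distrib sum_distrib_left mult.assoc)

lemma lc_sum: "lc n (\<lambda>C. \<Sum>i\<in>I. f i * \<Gamma> i C) = (\<lambda>w. \<Sum>i\<in>I. f i * lc n (\<Gamma> i) w)"
  unfolding lc_def by (rule ext) (simp add: sum_distrib_right sum_distrib_left mult.assoc, rule sum.swap)

lemma lc_delta: "C0 \<in> NW n \<Longrightarrow> lc n (\<lambda>C. if C = C0 then 1 else 0) = pe P C0"
  unfolding lc_def by (rule ext) (simp add: if_distrib[where f="\<lambda>u. u * _"] sum.delta finite_NW cong: if_cong)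

lemma hom_expand:
  fixes x :: "('i, 'k) ctensor"
  shows "hom n x \<Longrightarrow> x = (\<lambda>w. \<Sum>u\<in>Words n. x u * ev u w)"
proof
  fix w assume h: "hom n x"
  show "x w = (\<Sum>u\<in>Words n. x u * ev u w)"
  proof (cases "length w = n")
    case True
    have "(\<Sum>u\<in>Words n. x u * ev u w) = (\<Sum>u\<in>Words n. if w = u then x u else 0)"
      by (rule sum.cong) (auto simp: ev_def)
    also have "\<dots> = x w" unfolding sum.delta'[OF finW] using True by (simp add: Words_def)
    finally show ?thesis by simp
  next
    case False
    then have "\<forall>u\<in>Words n. ev u w = 0" by (auto simp: Words_def ev_def)
    then have "(\<Sum>u\<in>Words n. x u * ev u w) = 0" by (intro sum.neutral) auto
    then show ?thesis using False h by (simp add: homD)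
  qed
qed

lemma span_ev:
  fixes w :: "'i list"
  shows "length w = n \<Longrightarrow> \<exists>\<gamma>. ev w = lc n \<gamma>"
proof (induction "fm w" arbitrary: w rule: less_induct)
  case less
  define C0 where "C0 = sig0 w"
  have C0: "C0 \<in> NW n" using less.prems by (simp add: C0_def NW_def normal_sig0)
  define c0 where "c0 = pe P C0 w"
  have c0: "c0 \<noteq> 0" using pe_lead[of C0] by (simp add: c0_def C0_def)
  define S where "S = {u \<in> Words n. u \<noteq> w \<and> pe P C0 u \<noteq> 0}"
  have "\<forall>u\<in>S. \<exists>\<gamma>. ev u = lc n \<gamma>"
  proof
    fix u assume u: "u \<in> S"
    then have "u = lead C0 \<or> fm u < fm (lead C0)" using pe_tri by (auto simp: S_def)
    then have "fm u < fm w" using u by (auto simp: S_def C0_def)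
    then show "\<exists>\<gamma>. ev u = lc n \<gamma>" using less.hyps u by (auto simp: S_def Words_def)
  qed
  then obtain \<Gamma> where \<Gamma>: "\<forall>u\<in>S. ev u = lc n (\<Gamma> u)" by metis
  have finS: "finite S" by (rule finite_subset[OF _ finW[of n]]) (auto simp: S_def)
  have exp: "pe P C0 = (\<lambda>v. \<Sum>u\<in>Words n. pe P C0 u * ev u v)"
    using hom_expand[OF hom_pe[of C0 P]] C0 by (simp add: NW_def)
  have split: "(\<Sum>u\<in>Words n. pe P C0 u * ev u v) = c0 * ev w v + (\<Sum>u\<in>S. pe P C0 u * ev u v)" for v
  proof -
    have wW: "w \<in> Words n" using less.prems by (simp add: Words_def)
    have "(\<Sum>u\<in>Words n. pe P C0 u * ev u v) = pe P C0 w * ev w v + (\<Sum>u\<in>Words n - {w}. pe P C0 u * ev u v)"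
      using wW finW by (simp add: sum.remove)
    also have "(\<Sum>u\<in>Words n - {w}. pe P C0 u * ev u v) = (\<Sum>u\<in>S. pe P C0 u * ev u v)"
      by (rule sum.mono_neutral_right) (auto simp: S_def finW)
    finally show ?thesis by (simp add: c0_def)
  qed
  define \<gamma> where "\<gamma> = (\<lambda>C. inverse c0 * (if C = C0 then 1 else 0) + (\<Sum>u\<in>S. (- inverse c0 * pe P C0 u) * \<Gamma> u C))"
  have "lc n \<gamma> = (\<lambda>v. inverse c0 * lc n (\<lambda>C. if C = C0 then 1 else 0) v + lc n (\<lambda>C. \<Sum>u\<in>S. (- inverse c0 * pe P C0 u) * \<Gamma> u C) v)"
    unfolding \<gamma>_def by (rule lc_lin)
  also have "\<dots> = (\<lambda>v. inverse c0 * pe P C0 v + (\<Sum>u\<in>S. (- inverse c0 * pe P C0 u) * lc n (\<Gamma> u) v))"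
    by (simp only: lc_delta[OF C0] lc_sum)
  also have "\<dots> = (\<lambda>v. inverse c0 * pe P C0 v - inverse c0 * (\<Sum>u\<in>S. pe P C0 u * ev u v))"
    using \<Gamma> by (simp add: sum_distrib_left sum_negf mult.assoc)
  also have "\<dots> = ev w"
  proof
    fix v
    have "pe P C0 v = c0 * ev w v + (\<Sum>u\<in>S. pe P C0 u * ev u v)" using split[of v] exp by metis
    then show "inverse c0 * pe P C0 v - inverse c0 * (\<Sum>u\<in>S. pe P C0 u * ev u v) = ev w v"
      using c0 by (simp add: algebra_simps)
  qed
  finally show ?case by metis
qed

lemma spanning:
  fixes x :: "('i, 'k) ctensor"
  shows "hom n x \<Longrightarrow> \<exists>\<gamma>. x = lc n \<gamma>"
proof -
  assume h: "hom n x"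
  have "\<forall>u\<in>Words n. \<exists>\<gamma>. ev u = lc n \<gamma>" using span_ev by (auto simp: Words_def)
  then obtain \<Gamma> where \<Gamma>: "\<forall>u\<in>Words n. ev u = lc n (\<Gamma> u)" by metis
  have "lc n (\<lambda>C. \<Sum>u\<in>Words n. x u * \<Gamma> u C) = (\<lambda>w. \<Sum>u\<in>Words n. x u * lc n (\<Gamma> u) w)" by (rule lc_sum)
  also have "\<dots> = (\<lambda>w. \<Sum>u\<in>Words n. x u * ev u w)" using \<Gamma> by simp
  also have "\<dots> = x" using hom_expand[OF h] by simp
  finally show ?thesis by metis
qed

lemma independence:
  assumes z: "lc n \<gamma> = (\<lambda>w. 0)" and C: "C \<in> NW n"
  shows "\<gamma> C = 0"
proof (rule ccontr)
  assume nz: "\<gamma> C \<noteq> 0"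
  define S where "S = {C \<in> NW n. \<gamma> C \<noteq> 0}"
  have finS: "finite S" using finite_NW by (simp add: S_def)
  have neS: "S \<noteq> {}" using nz C by (auto simp: S_def)
  define M where "M = Max ((\<lambda>C. fm (lead C)) ` S)"
  have "M \<in> (\<lambda>C. fm (lead C)) ` S" unfolding M_def using finS neS by (intro Max_in) auto
  then obtain C1 where C1: "C1 \<in> S" "fm (lead C1) = M" by auto
  have maxM: "fm (lead C') \<le> M" if "C' \<in> S" for C'
    unfolding M_def using finS that by (intro Max_ge) auto
  have "0 = lc n \<gamma> (lead C1)" using z by metis
  also have "\<dots> = (\<Sum>C'\<in>NW n. \<gamma> C' * pe P C' (lead C1))" by (simp add: lc_def)
  also have "\<dots> = \<gamma> C1 * pe P C1 (lead C1) + (\<Sum>C'\<in>NW n - {C1}. \<gamma> C' * pe P C' (lead C1))"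
    using C1 finite_NW by (intro sum.remove) (auto simp: S_def)
  also have "(\<Sum>C'\<in>NW n - {C1}. \<gamma> C' * pe P C' (lead C1)) = 0"
  proof (rule sum.neutral, rule ballI)
    fix C' assume C': "C' \<in> NW n - {C1}"
    show "\<gamma> C' * pe P C' (lead C1) = 0"
    proof (rule ccontr)
      assume "\<gamma> C' * pe P C' (lead C1) \<noteq> 0"
      then have g': "\<gamma> C' \<noteq> 0" and p': "pe P C' (lead C1) \<noteq> 0" by auto
      have C'S: "C' \<in> S" using C' g' by (auto simp: S_def)
      from pe_tri[OF p'] show False
      proof
        assume "lead C1 = lead C'"
        then have "sig0 (lead C1) = sig0 (lead C')" by simp
        then have "C1 = C'" using C1(1) C' sig0_lead by (auto simp: S_def NW_def)
        then show False using C' by simp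
      next
        assume "fm (lead C1) < fm (lead C')"
        then show False using maxM[OF C'S] C1(2) by simp
      qed
    qed
  qed
  finally have "\<gamma> C1 * pe P C1 (lead C1) = 0" by simp
  then show False using pe_lead[of C1] C1(1) by (simp add: S_def)
qed

end

context zb begin

definition coef :: "nat \<Rightarrow> ('i, 'k) ctensor \<Rightarrow> 'i option list \<Rightarrow> 'k" where
  "coef n x = (SOME \<gamma>. x = lc n \<gamma>)"

lemma coef_lc:
  assumes "hom n x" shows "x = lc n (coef n x)"
proof -
  obtain \<gamma> where "x = lc n \<gamma>" using spanning[OF assms] by blast
  then show ?thesis unfolding coef_def using someI[where P="\<lambda>\<gamma>. x = lc n \<gamma>"] by blast
qed

lemma lc_diff: "lc n (\<lambda>C. \<gamma>1 C - \<gamma>2 C) = (\<lambda>w. lc n \<gamma>1 w - lc n \<gamma>2 w)"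
  unfolding lc_def by (rule ext) (simp add: left_diff_distrib sum_subtractf)

lemma coef_unique:
  assumes "x = lc n \<gamma>" "C \<in> NW n"
  shows "coef n x C = \<gamma> C"
proof -
  have h: "hom n x" using assms(1) hom_lc by simp
  have "lc n (\<lambda>C. coef n x C - \<gamma> C) = (\<lambda>w. 0)"
    unfolding lc_diff using coef_lc[OF h] assms(1) by simp
  then show ?thesis using independence[OF _ assms(2)] by fastforce
qed

lemma coef_pe: "C0 \<in> NW n \<Longrightarrow> C \<in> NW n \<Longrightarrow> coef n (pe P C0) C = (if C = C0 then 1 else 0)"
  using coef_unique[OF lc_delta[symmetric]] by simp

lemma coef_sum:
  assumes "finite I" "\<forall>i\<in>I. hom n (f i)" "C \<in> NW n"
  shows "coef n (\<lambda>w. \<Sum>i\<in>I. c i * f i w) C = (\<Sum>i\<in>I. c i * coef n (f i) C)"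
proof -
  have "(\<lambda>w. \<Sum>i\<in>I. c i * f i w) = (\<lambda>w. \<Sum>i\<in>I. c i * lc n (coef n (f i)) w)"
    using assms(2) coef_lc by (intro ext sum.cong refl) (metis)
  also have "\<dots> = lc n (\<lambda>C. \<Sum>i\<in>I. c i * coef n (f i) C)" by (rule lc_sum[symmetric])
  finally show ?thesis by (rule coef_unique[OF _ assms(3)])
qed

lemma coef_lin:
  assumes "hom n x" "hom n y" "C \<in> NW n"
  shows "coef n (\<lambda>w. c * x w + y w) C = c * coef n x C + coef n y C"
proof -
  have "(\<lambda>w. c * x w + y w) = (\<lambda>w. c * lc n (coef n x) w + lc n (coef n y) w)"
    using coef_lc[OF assms(1)] coef_lc[OF assms(2)] by simp
  also have "\<dots> = lc n (\<lambda>C. c * coef n x C + coef n y C)" by (rule lc_lin[symmetric])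
  finally show ?thesis by (rule coef_unique[OF _ assms(3)])
qed

lemma coef_zero: "C \<in> NW n \<Longrightarrow> coef n (\<lambda>w. 0) C = 0"
proof -
  assume C: "C \<in> NW n"
  have "(\<lambda>w. 0) = lc n (\<lambda>C. 0)" by (simp add: lc_def)
  then show ?thesis using coef_unique[OF _ C] by simp
qed

lemma tmul_lc_left: "tmul (lc n \<gamma>) y = (\<lambda>w. \<Sum>B\<in>NW n. \<gamma> B * tmul (pe P B) y w)"
  unfolding lc_def tmul_sum_left tmul_scale_left by simp

lemma tmul_lc_right: "tmul y (lc n \<gamma>) = (\<lambda>w. \<Sum>B\<in>NW n. \<gamma> B * tmul y (pe P B) w)"
  unfolding lc_def tmul_sum_right tmul_scale_right by simp

lemma sum_nonzero_ex: "(\<Sum>i\<in>I. f i) \<noteq> (0::'k) \<Longrightarrow> \<exists>i\<in>I. f i \<noteq> 0"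
  by (meson sum.neutral)

lemma coef_GL:
  assumes hu: "hom p u" and nC2: "normal C2" and C2: "C2 \<noteq> []" "hd C2 = None"
    and C: "C \<in> NW (p + wt C2)"
    and nz: "coef (p + wt C2) (tmul u (pe P C2)) C \<noteq> 0"
  shows "\<exists>t1. C = t1 @ C2"
proof -
  have memB: "B @ C2 \<in> NW (p + wt C2)" if "B \<in> NW p" for B
    using that nC2 C2 by (auto simp: NW_def normal_append)
  have "tmul u (pe P C2) = (\<lambda>w. \<Sum>B\<in>NW p. coef p u B * tmul (pe P B) (pe P C2) w)"
    using coef_lc[OF hu] tmul_lc_left by metis
  also have "\<dots> = (\<lambda>w. \<Sum>B\<in>NW p. coef p u B * pe P (B @ C2) w)" by (simp add: pe_append_tmul)
  finally have e: "tmul u (pe P C2) = (\<lambda>w. \<Sum>B\<in>NW p. coef p u B * pe P (B @ C2) w)" .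
  have "coef (p + wt C2) (tmul u (pe P C2)) C = (\<Sum>B\<in>NW p. coef p u B * coef (p + wt C2) (pe P (B @ C2)) C)"
    unfolding e by (rule coef_sum[OF finite_NW _ C]) (auto simp: NW_def intro: hom_pe[of "_ @ C2", simplified])
  also have "\<dots> = (\<Sum>B\<in>NW p. coef p u B * (if C = B @ C2 then 1 else 0))"
    by (intro sum.cong refl) (simp add: coef_pe[OF memB C])
  finally have "(\<Sum>B\<in>NW p. coef p u B * (if C = B @ C2 then 1 else 0)) \<noteq> 0" using nz by simp
  then obtain B where "B \<in> NW p" "coef p u B * (if C = B @ C2 then 1 else 0) \<noteq> 0"
    using sum_nonzero_ex by blast
  then show ?thesis by (auto split: if_splits)
qed

lemma coef_GR:
  assumes hv: "hom q v" and nC1: "normal C1" and C1: "C1 \<noteq> []" "last C1 = None"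
    and C: "C \<in> NW (wt C1 + q)"
    and nz: "coef (wt C1 + q) (tmul (pe P C1) v) C \<noteq> 0"
  shows "\<exists>t2. C = C1 @ t2"
proof -
  have memB: "C1 @ B \<in> NW (wt C1 + q)" if "B \<in> NW q" for B
    using that nC1 C1 by (auto simp: NW_def normal_append)
  have "tmul (pe P C1) v = (\<lambda>w. \<Sum>B\<in>NW q. coef q v B * tmul (pe P C1) (pe P B) w)"
    using coef_lc[OF hv] tmul_lc_right by metis
  also have "\<dots> = (\<lambda>w. \<Sum>B\<in>NW q. coef q v B * pe P (C1 @ B) w)" by (simp add: pe_append_tmul)
  finally have e: "tmul (pe P C1) v = (\<lambda>w. \<Sum>B\<in>NW q. coef q v B * pe P (C1 @ B) w)" .
  have "coef (wt C1 + q) (tmul (pe P C1) v) C = (\<Sum>B\<in>NW q. coef q v B * coef (wt C1 + q) (pe P (C1 @ B)) C)"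
    unfolding e by (rule coef_sum[OF finite_NW _ C]) (auto simp: NW_def intro: hom_pe[of "C1 @ _", simplified])
  also have "\<dots> = (\<Sum>B\<in>NW q. coef q v B * (if C = C1 @ B then 1 else 0))"
    by (intro sum.cong refl) (simp add: coef_pe[OF memB C])
  finally have "(\<Sum>B\<in>NW q. coef q v B * (if C = C1 @ B then 1 else 0)) \<noteq> 0" using nz by simp
  then obtain B where "B \<in> NW q" "coef q v B * (if C = C1 @ B then 1 else 0) \<noteq> 0"
    using sum_nonzero_ex by blast
  then show ?thesis by (auto split: if_splits)
qed

lemma normal_repl: "normal (replicate l None)"
  by (induction l) (auto simp: normal_Cons)

lemma coef_GZ:
  assumes hu: "hom p u" and hv: "hom q v" and l: "1 \<le> l"
    and C: "C \<in> NW (p + 2*l + q)"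
    and nz: "coef (p + 2*l + q) (tmul (tmul u (pe P (replicate l None))) v) C \<noteq> 0"
  shows "\<exists>t1 t2. C = t1 @ replicate l None @ t2"
proof -
  have hz: "hom (2*l) (pe P (replicate l None))" by (metis hom_pe wt_replicate_None)
  have "tmul (tmul u (pe P (replicate l None))) v = tmul u (tmul (pe P (replicate l None)) v)"
    by (rule tmul_assoc_hom[OF hu hz hv])
  also have "tmul (pe P (replicate l None)) v = (\<lambda>w. \<Sum>B\<in>NW q. coef q v B * tmul (pe P (replicate l None)) (pe P B) w)"
    using coef_lc[OF hv] tmul_lc_right by metis
  also have "\<dots> = (\<lambda>w. \<Sum>B\<in>NW q. coef q v B * pe P (replicate l None @ B) w)"
    by (simp add: pe_append_tmul)
  also have "tmul u (\<lambda>w. \<Sum>B\<in>NW q. coef q v B * pe P (replicate l None @ B) w) =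
      (\<lambda>w. \<Sum>B\<in>NW q. coef q v B * tmul u (pe P (replicate l None @ B)) w)"
    unfolding tmul_sum_right tmul_scale_right by simp
  finally have e: "tmul (tmul u (pe P (replicate l None))) v =
      (\<lambda>w. \<Sum>B\<in>NW q. coef q v B * tmul u (pe P (replicate l None @ B)) w)" .
  have hB: "hom (p + 2*l + q) (tmul u (pe P (replicate l None @ B)))" if "B \<in> NW q" for B
  proof -
    have "hom (p + wt (replicate l None @ B)) (tmul u (pe P (replicate l None @ B)))"
      by (rule hom_tmul[OF hu hom_pe])
    then show ?thesis using that by (simp add: NW_def add.assoc)
  qed
  have cs: "coef (p + 2*l + q) (tmul (tmul u (pe P (replicate l None))) v) C =
      (\<Sum>B\<in>NW q. coef q v B * coef (p + 2*l + q) (tmul u (pe P (replicate l None @ B))) C)"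
    unfolding e by (rule coef_sum[OF finite_NW _ C]) (use hB in auto)
  obtain B where B0: "B \<in> NW q" "coef q v B * coef (p + 2*l + q) (tmul u (pe P (replicate l None @ B))) C \<noteq> 0"
    using sum_nonzero_ex[of "\<lambda>B. coef q v B * coef (p + 2*l + q) (tmul u (pe P (replicate l None @ B))) C" "NW q"]
      nz cs by auto
  then have B: "B \<in> NW q" "coef (p + 2*l + q) (tmul u (pe P (replicate l None @ B))) C \<noteq> 0" by auto
  have nB: "normal (replicate l None @ B)"
    using B(1) normal_repl l by (auto simp: NW_def normal_append)
  have ne: "replicate l None @ B \<noteq> []" "hd (replicate l None @ B) = None" using l by (auto simp: hd_append)
  have eqn: "p + 2*l + q = p + wt (replicate l None @ B)" using B(1) by (simp add: NW_def)
  obtain t1 where "C = t1 @ (replicate l None @ B)"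
    using coef_GL[OF hu nB ne, of C] B(2) C unfolding eqn by blast
  then show ?thesis by blast
qed

end

lemma repl_Some_eq:
  "replicate j None @ (Some u # X) = replicate k None @ (Some v # Y) \<Longrightarrow> j = k \<and> u = v \<and> X = Y"
proof (induction j arbitrary: k)
  case 0 then show ?case by (cases k) auto
next
  case (Suc j) then show ?case by (cases k) auto
qed

definition cntN :: "'i option list \<Rightarrow> nat" where
  "cntN C = length (filter (\<lambda>s. s = None) C)"

lemma cntN_simps[simp]: "cntN [] = 0" "cntN (None # C) = Suc (cntN C)" "cntN (Some c # C) = cntN C"
  "cntN (C1 @ C2) = cntN C1 + cntN C2" "cntN (replicate k None) = k"
  by (auto simp: cntN_def)

lemma wt_cntN: "wt C = length C + cntN C"
  by (induction C rule: wt.induct) auto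

lemma cntN_le: "2 * cntN C \<le> wt C"
proof -
  have "cntN C \<le> length C" by (simp add: cntN_def)
  then show ?thesis by (simp add: wt_cntN)
qed

lemma no_repl_factor:
  assumes "cntN R < l"
  shows "t1 @ replicate l None @ t2 \<noteq> Some c # replicate (l-1) None @ Some u # R"
proof
  assume eq: "t1 @ replicate l None @ t2 = Some c # replicate (l-1) None @ Some u # R"
  have l: "1 \<le> l" using assms by simp
  obtain t1' where t1: "t1 = Some c # t1'"
    using eq l by (cases t1; cases l) auto
  have eq': "t1' @ replicate l None @ t2 = replicate (l-1) None @ Some u # R" using eq t1 by simp
  show False
  proof (cases "length t1' \<le> l - 1")
    case True
    have "(replicate (l-1) None @ Some u # R) ! (l-1) = Some u" by (simp add: nth_append)
    moreover have "(t1' @ replicate l None @ t2) ! (l-1) = None"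
      using True l by (simp add: nth_append)
    ultimately show False using eq' by simp
  next
    case False
    have "drop l (replicate (l-1) None @ Some u # R) = R"
      using l by (simp add: drop_append)
    moreover have "drop l (t1' @ replicate l None @ t2) = drop l t1' @ replicate l None @ t2"
      using False by simp
    ultimately have "R = drop l t1' @ replicate l None @ t2" using eq' by simp
    then have "cntN R \<ge> l" by simp
    then show False using assms by simp
  qed
qed

lemma no_repl_suffix:
  assumes "J < k"
  shows "X @ Some v # replicate J None \<noteq> t1 @ replicate k None"
proof
  assume eq: "X @ Some v # replicate J None = t1 @ replicate k None"
  have "rev (X @ Some v # replicate J None) = replicate J None @ Some v # rev X" by simp
  moreover have "rev (t1 @ replicate k None) = replicate k None @ rev t1" by simp
  ultimately have eq2: "replicate J None @ Some v # rev X = replicate k None @ rev t1" using eq by metis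
  have "(replicate J None @ Some v # rev X) ! J = Some v" by (simp add: nth_append)
  moreover have "(replicate k None @ rev t1) ! J = None" using assms by (simp add: nth_append)
  ultimately show False using eq2 by simp
qed

lemma Cyc_hom: "hom N y \<Longrightarrow> hom N (Cyc y)"
  unfolding hom_def Cyc_def by (auto intro!: sum.neutral)

lemma hom_sum1: "(\<forall>i\<in>I. hom n (f i)) \<Longrightarrow> hom n (\<lambda>w. \<Sum>i\<in>I. f i w)"
  unfolding hom_def by (auto intro!: sum.neutral)

lemma hom_scale: "hom n f \<Longrightarrow> hom n (\<lambda>w. c * f w)"
  unfolding hom_def by auto

lemma hom_add: "hom n f \<Longrightarrow> hom n g \<Longrightarrow> hom n (\<lambda>w. f w + g w)"
  unfolding hom_def by auto

context zb begin

lemma coef_sum1: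
  assumes "finite I" "\<forall>i\<in>I. hom n (f i)" "C \<in> NW n"
  shows "coef n (\<lambda>w. \<Sum>i\<in>I. f i w) C = (\<Sum>i\<in>I. coef n (f i) C)"
  using coef_sum[OF assms, of "\<lambda>_. 1"] by simp

lemma coef_scale:
  assumes "hom n f" "C \<in> NW n"
  shows "coef n (\<lambda>w. c * f w) C = c * coef n f C"
  using coef_lin[OF assms(1) _ assms(2), of "\<lambda>w. 0" c] coef_zero[OF assms(2)] by (simp add: hom_def)

lemma coef_add:
  assumes "hom n f1" "hom n f2" "C \<in> NW n"
  shows "coef n (\<lambda>w. f1 w + f2 w) C = coef n f1 C + coef n f2 C"
  using coef_lin[OF assms, of 1] by simp

end

locale zbt = zb +
  fixes n :: nat and C B0 and J l :: nat
  assumes CNW: "C \<in> NW n" and Cdec: "C = B0 @ replicate J None" and B0ne: "B0 \<noteq> []"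
    and hdB0: "hd B0 \<noteq> None" and lastB0: "last B0 \<noteq> None" and lbig: "n + 2 \<le> l"

context zbt begin

definition tgt where "tgt = Some b # replicate (l-1) None @ C @ [Some a]"

lemma wtC: "wt C = n" using CNW by (simp add: NW_def)

lemma nC: "normal C" using CNW by (simp add: NW_def)

lemma n1: "1 \<le> n"
proof -
  have "C \<noteq> []" using Cdec B0ne by simp
  then have "1 \<le> length C" by (cases C) auto
  then show ?thesis using wtC length_le_wt[of C] by simp
qed

lemma cntC: "2 * cntN C \<le> n" using cntN_le[of C] wtC by simp

lemma Jl: "J < l - 1"
proof -
  have "cntN C = cntN B0 + J" using Cdec by simp
  then show ?thesis using cntC lbig by linarith
qed

lemma C_cons: "\<exists>u R. C = Some u # R"
proof -
  obtain s B0' where "B0 = s # B0'" using B0ne by (cases B0) auto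
  moreover then obtain u where "s = Some u" using hdB0 by (cases s) auto
  ultimately show ?thesis using Cdec by auto
qed

lemma B0_snoc: "\<exists>X v. B0 = X @ [Some v]"
proof -
  obtain X s where "B0 = X @ [s]" using B0ne by (cases B0 rule: rev_cases) auto
  moreover then obtain v where "s = Some v" using lastB0 by (cases s) auto
  ultimately show ?thesis by auto
qed

lemma tgt_NW: "tgt \<in> NW (n + 2*l)"
proof -
  have l1: "1 \<le> l - 1" using lbig by simp
  have nz: "normal (replicate (l-1) None)" by (rule normal_repl)
  have nCa: "normal (C @ [Some a])" using nC ab by (simp add: normal_append)
  have "normal (replicate (l-1) None @ C @ [Some a])"
    using nz nCa l1 by (simp add: normal_append del: append_assoc)
  then have "normal tgt" unfolding tgt_def using ab by (simp add: normal_Cons)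
  moreover have "wt tgt = n + 2*l" unfolding tgt_def using wtC lbig by simp
  ultimately show ?thesis by (simp add: NW_def)
qed

lemma tgt_start: "1 \<le> i \<Longrightarrow> tgt \<noteq> replicate i None @ t2"
  unfolding tgt_def by (cases i) auto

lemma tgt_no_factor: "tgt \<noteq> t1 @ replicate l None @ t2"
proof -
  obtain u R where CR: "C = Some u # R" using C_cons by blast
  have "cntN (R @ [Some a]) < l" using cntC lbig CR by simp
  then have "t1 @ replicate l None @ t2 \<noteq> Some b # replicate (l-1) None @ Some u # (R @ [Some a])"
    by (rule no_repl_factor)
  moreover have "tgt = Some b # replicate (l-1) None @ Some u # (R @ [Some a])"
    unfolding tgt_def using CR by simp
  ultimately show ?thesis by metis
qed

lemma tgt_no_suffix: "tgt \<noteq> t1 @ replicate (l-1) None @ [Some x']"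
proof
  assume eq: "tgt = t1 @ replicate (l-1) None @ [Some x']"
  have "butlast tgt = Some b # replicate (l-1) None @ C" unfolding tgt_def
    by (simp add: butlast_append)
  moreover have "butlast (t1 @ replicate (l-1) None @ [Some x']) = t1 @ replicate (l-1) None"
    by (simp add: butlast_append)
  ultimately have e: "Some b # replicate (l-1) None @ C = t1 @ replicate (l-1) None" using eq by simp
  obtain X v where Xv: "B0 = X @ [Some v]" using B0_snoc by blast
  have "(Some b # replicate (l-1) None @ X) @ Some v # replicate J None = t1 @ replicate (l-1) None"
    using e Cdec Xv by simp
  then show False using no_repl_suffix[OF Jl, of "Some b # replicate (l-1) None @ X" v t1] by simp
qed

lemma tgt_pref: "tgt = (Some y' # replicate (l-1) None) @ t2 \<Longrightarrow> y' = b \<and> t2 = C @ [Some a]"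
  unfolding tgt_def by simp

lemma tgt_mid:
  assumes j: "0 < j" "j < l - 1" and B: "B \<in> NW n" "hd B \<noteq> None \<or> (\<forall>s\<in>set B. s = None)"
  shows "tgt \<noteq> Some y' # replicate j None @ B @ replicate (l-1-j) None @ [Some x']"
proof
  assume eq: "tgt = Some y' # replicate j None @ B @ replicate (l-1-j) None @ [Some x']"
  obtain u R where CR: "C = Some u # R" using C_cons by blast
  have e: "replicate (l-1) None @ Some u # (R @ [Some a]) = replicate j None @ B @ replicate (l-1-j) None @ [Some x']"
    using eq CR unfolding tgt_def by simp
  have Bne: "B \<noteq> []" using B(1) n1 by (auto simp: NW_def)
  show False
  proof (cases "hd B = None")
    case False
    then obtain v B' where "B = Some v # B'" using Bne by (cases B; cases "hd B") auto
    then have "replicate (l-1) None @ Some u # (R @ [Some a]) = replicate j None @ Some v # (B' @ replicate (l-1-j) None @ [Some x'])"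
      using e by simp
    then have "l - 1 = j" by (rule repl_Some_eq[THEN conjunct1])
    then show False using j by simp
  next
    case True
    then have "\<forall>s\<in>set B. s = None" using B(2) by simp
    then have "B = replicate (length B) None" by (simp add: replicate_length_same)
    then obtain k where Bk: "B = replicate k None" by blast
    have "replicate j None @ B @ replicate (l-1-j) None = replicate (j + k + (l-1-j)) None"
      unfolding Bk by (simp add: replicate_add[symmetric])
    then have "replicate (l-1) None @ Some u # (R @ [Some a]) = replicate (j + k + (l-1-j)) None @ Some x' # []"
      using e by (simp del: replicate_append_same)
    then have "R @ [Some a] = []" by (rule repl_Some_eq[THEN conjunct2, THEN conjunct2])
    then show False by simp
  qed
qed

end

context zbt begin

lemma l3: "3 \<le> l" using lbig n1 by simp

lemma normal_None_Cons: "normal (None # X) = normal X"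
  by (simp add: normal_Cons)

lemma normal_repl_Some: "normal (replicate k None @ [Some c])"
  by (induction k) (auto simp: normal_None_Cons)

lemma cE:
  assumes B: "B \<in> NW n" and i: "i \<le> l"
  shows "coef (n + 2*l) (tmul (tmul (pe P (replicate i None)) (pe P B)) (pe P (replicate (l-i) None))) tgt = 0"
proof -
  have hx: "hom n (pe P B)" using B hom_pe[of B P] by (simp add: NW_def)
  have hz: "\<And>k. hom (2*k) (pe P (replicate k None))" by (metis hom_pe wt_replicate_None)
  show ?thesis
  proof (cases "i = 0")
    case True
    have e: "tmul (tmul (pe P (replicate i None)) (pe P B)) (pe P (replicate (l-i) None)) =
        tmul (tmul (pe P B) (pe P (replicate l None))) tone"
      using True by (simp add: pe_Nil tmul_tone_left tmul_tone_right)
    show ?thesis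
    proof (rule ccontr)
      assume nz: "coef (n + 2*l) (tmul (tmul (pe P (replicate i None)) (pe P B)) (pe P (replicate (l-i) None))) tgt \<noteq> 0"
      have "\<exists>t1 t2. tgt = t1 @ replicate l None @ t2"
        using coef_GZ[OF hx hom_tone, of l tgt] nz e l3 tgt_NW by simp
      then show False using tgt_no_factor by blast
    qed
  next
    case False
    have e: "tmul (tmul (pe P (replicate i None)) (pe P B)) (pe P (replicate (l-i) None)) =
        tmul (pe P (replicate i None)) (tmul (pe P B) (pe P (replicate (l-i) None)))"
      by (rule tmul_assoc_hom[OF hz hx hz])
    have hv: "hom (n + 2*(l-i)) (tmul (pe P B) (pe P (replicate (l-i) None)))" by (rule hom_tmul[OF hx hz])
    have nN: "wt (replicate i None) + (n + 2*(l-i)) = n + 2*l" using i by simp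
    show ?thesis
    proof (rule ccontr)
      assume nz: "coef (n + 2*l) (tmul (tmul (pe P (replicate i None)) (pe P B)) (pe P (replicate (l-i) None))) tgt \<noteq> 0"
      have "\<exists>t2. tgt = replicate i None @ t2"
        using coef_GR[OF hv normal_repl, of i tgt] nz e tgt_NW False unfolding nN by (simp add: last_replicate)
      then show False using tgt_start False by auto
    qed
  qed
qed

lemma cT:
  assumes r: "r \<in> {2*l<..<n+2*l}" and al: "\<alpha> \<in> Words (r-2*l)" and be: "\<beta> \<in> Words (n+2*l-r)"
  shows "coef (n + 2*l) (tmul (tmul (ev \<alpha>) (pe P (replicate l None))) (ev \<beta>)) tgt = 0"
proof (rule ccontr)
  assume nz: "coef (n + 2*l) (tmul (tmul (ev \<alpha>) (pe P (replicate l None))) (ev \<beta>)) tgt \<noteq> 0"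
  have nN: "length \<alpha> + 2*l + length \<beta> = n + 2*l" using r al be by (auto simp: Words_def)
  have "\<exists>t1 t2. tgt = t1 @ replicate l None @ t2"
    using coef_GZ[OF hom_ev hom_ev, of l tgt \<alpha> \<beta>] nz tgt_NW l3 unfolding nN by simp
  then show False using tgt_no_factor by blast
qed

lemma cO:
  assumes B: "B \<in> NW n" "hd B \<noteq> None \<or> (\<forall>s\<in>set B. s = None)" and j: "j < l"
  shows "P x' y' * coef (n + 2*l) (tmul (tmul (pe P (Some y' # replicate j None)) (pe P B))
      (pe P (replicate (l-1-j) None @ [Some x']))) tgt = (if j = l-1 \<and> x' = a \<and> y' = b \<and> B = C then P a b else 0)"
proof -
  have wB: "wt B = n" and nB: "normal B" using B by (auto simp: NW_def)
  define L where "L = Some y' # replicate j None"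
  define R where "R = replicate (l-1-j) None @ [Some x']"
  have Oeq: "tmul (tmul (pe P L) (pe P B)) (pe P R) = pe P (L @ B @ R)"
    by (simp only: pe_append_tmul[symmetric] append_assoc)
  have Oeq': "tmul (tmul (pe P (Some y' # replicate j None)) (pe P B)) (pe P (replicate (l-1-j) None @ [Some x'])) = pe P (L @ B @ R)"
    unfolding L_def[symmetric] R_def[symmetric] by (rule Oeq)
  have wtW: "wt (L @ B @ R) = n + 2*l" using j wB by (simp add: L_def R_def)
  have nR: "normal R" unfolding R_def by (rule normal_repl_Some)
  have nL: "normal L" unfolding L_def by (cases j) (simp_all add: normal_Cons normal_repl)
  show ?thesis
  proof (cases "P x' y' = 0")
    case True
    then have "\<not> (x' = a \<and> y' = b)" using Pab by auto
    then show ?thesis using True by auto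
  next
    case False
    then have xy: "x' \<noteq> y'" using Pdiag by auto
    show ?thesis
    proof (cases "j = l - 1")
      case jl: True
      have R1: "R = [Some x']" using jl by (simp add: R_def)
      show ?thesis
      proof (cases "y' = b")
        case yb: True
        then have xb: "x' \<noteq> b" using xy by simp
        have nW: "normal (L @ B @ R)"
        proof -
          have "normal (B @ R)" using nB xb R1 by (simp add: normal_append)
          moreover have "last L = None" using jl l3 by (simp add: L_def last_replicate)
          ultimately show ?thesis using nL by (simp add: normal_append del: append_assoc)
        qed
        have WN: "L @ B @ R \<in> NW (n + 2*l)" using nW wtW by (simp add: NW_def)
        have "coef (n + 2*l) (pe P (L @ B @ R)) tgt = (if tgt = L @ B @ R then 1 else 0)"
          by (rule coef_pe[OF WN tgt_NW])
        also have "(tgt = L @ B @ R) \<longleftrightarrow> (C = B \<and> a = x')"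
          unfolding tgt_def L_def R1 using jl yb by auto
        finally have cv: "coef (n + 2*l) (pe P (L @ B @ R)) tgt = (if C = B \<and> a = x' then 1 else 0)" .
        show ?thesis unfolding Oeq' using cv jl yb by auto
      next
        case yb: False
        have e2: "pe P (L @ B @ R) = tmul (pe P L) (pe P (B @ R))" by (rule pe_append_tmul)
        have hv: "hom (n + 1) (pe P (B @ R))" using hom_pe[of "B @ R" P] wB R1 by simp
        have Lne: "L \<noteq> []" "last L = None" using jl l3 by (auto simp: L_def last_replicate)
        have nN: "wt L + (n + 1) = n + 2*l" using jl l3 by (simp add: L_def)
        have "coef (n + 2*l) (pe P (L @ B @ R)) tgt = 0"
        proof (rule ccontr)
          assume nz: "coef (n + 2*l) (pe P (L @ B @ R)) tgt \<noteq> 0"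
          have "\<exists>t2. tgt = L @ t2" using coef_GR[OF hv nL Lne, of tgt] nz e2 tgt_NW unfolding nN by simp
          then obtain t2 where "tgt = (Some y' # replicate (l-1) None) @ t2" using jl by (auto simp: L_def)
          then show False using tgt_pref yb by blast
        qed
        then show ?thesis unfolding Oeq' using yb by simp
      qed
    next
      case jl: False
      show ?thesis
      proof (cases "j = 0")
        case j0: True
        have e2: "pe P (L @ B @ R) = tmul (pe P (L @ B)) (pe P R)"
          by (simp only: pe_append_tmul[symmetric] append_assoc)
        have hu: "hom (n + 1) (pe P (L @ B))" using hom_pe[of "L @ B" P] wB j0 by (simp add: L_def)
        have Rne: "R \<noteq> []" "hd R = None" using j0 jl l3 by (auto simp: R_def)
        have nN: "n + 1 + wt R = n + 2*l" using j0 l3 by (simp add: R_def)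
        have "coef (n + 2*l) (pe P (L @ B @ R)) tgt = 0"
        proof (rule ccontr)
          assume nz: "coef (n + 2*l) (pe P (L @ B @ R)) tgt \<noteq> 0"
          have "\<exists>t1. tgt = t1 @ R" using coef_GL[OF hu nR Rne, of tgt] nz e2 tgt_NW unfolding nN by simp
          then show False using tgt_no_suffix j0 by (auto simp: R_def)
        qed
        then show ?thesis unfolding Oeq' using jl by simp
      next
        case j0: False
        have nW: "normal (L @ B @ R)"
        proof -
          have "hd R = None" using j jl by (simp add: R_def)
          then have "normal (B @ R)" using nB nR by (auto simp: normal_append)
          moreover have "last L = None" using j0 by (simp add: L_def last_replicate)
          ultimately show ?thesis using nL by (simp add: normal_append del: append_assoc)
        qed
        have WN: "L @ B @ R \<in> NW (n + 2*l)" using nW wtW by (simp add: NW_def)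
        have "tgt \<noteq> L @ B @ R" unfolding L_def R_def
          using tgt_mid[OF _ _ B, of j y' x'] j0 jl j by simp
        then have "coef (n + 2*l) (pe P (L @ B @ R)) tgt = 0" by (simp add: coef_pe[OF WN tgt_NW])
        then show ?thesis unfolding Oeq' using jl by simp
      qed
    qed
  qed
qed

lemma Phi:
  assumes B: "B \<in> NW n" "hd B \<noteq> None \<or> (\<forall>s\<in>set B. s = None)"
  shows "coef (n + 2*l) (Cyc (tmul (pe P B) (pe P (replicate l None)))) tgt = (if B = C then P a b else 0)"
proof -
  define x where "x = pe P B"
  have hx: "hom n x" using B hom_pe[of B P] by (simp add: NW_def x_def)
  have hz: "\<And>k. hom (2*k) (pe P (replicate k None))" by (metis hom_pe wt_replicate_None)
  define N where "N = n + 2*l"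
  define E where "E i = tmul (tmul (pe P (replicate i None)) x) (pe P (replicate (l-i) None))" for i
  define Od where "Od j x' y' = tmul (tmul (pe P (Some y' # replicate j None)) x) (pe P (replicate (l-1-j) None @ [Some x']))" for j x' y'
  define T where "T \<alpha> \<beta> = tmul (tmul (ev \<alpha>) (pe P (replicate l None))) (ev \<beta>)" for \<alpha> \<beta>
  define SE where "SE = (\<lambda>w. \<Sum>i\<le>l. E i w)"
  define SO where "SO = (\<lambda>w. \<Sum>j<l. \<Sum>x'\<in>UNIV. \<Sum>y'\<in>UNIV. P x' y' * Od j x' y' w)"
  define ST where "ST = (\<lambda>w. \<Sum>r\<in>{2*l<..<n+2*l}. \<Sum>\<alpha>\<in>Words (r-2*l). \<Sum>\<beta>\<in>Words (n+2*l-r). x (\<beta> @ \<alpha>) * T \<alpha> \<beta> w)"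
  have dec: "Cyc (tmul x (pe P (replicate l None))) = (\<lambda>w. SE w + SO w + ST w)"
    unfolding SE_def SO_def ST_def E_def Od_def T_def by (rule ext) (rule Cyc_decomp[OF hx n1])
  have hE: "hom N (E i)" if "i \<le> l" for i
  proof -
    have h: "hom (2*i + n + 2*(l-i)) (E i)" unfolding E_def by (intro hom_tmul hz hx)
    have eq: "2*i + n + 2*(l-i) = N" using that by (simp add: N_def)
    show ?thesis using h unfolding eq .
  qed
  have hO: "hom N (Od j x' y')" if "j < l" for j x' y'
  proof -
    have h: "hom (wt (Some y' # replicate j None) + n + wt (replicate (l-1-j) None @ [Some x'])) (Od j x' y')"
      unfolding Od_def by (intro hom_tmul hom_pe hx)
    have eq: "wt (Some y' # replicate j None) + n + wt (replicate (l-1-j) None @ [Some x']) = N"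
      using that by (simp add: N_def)
    show ?thesis using h unfolding eq .
  qed
  have hT: "hom N (T \<alpha> \<beta>)" if "r \<in> {2*l<..<n+2*l}" "\<alpha> \<in> Words (r-2*l)" "\<beta> \<in> Words (n+2*l-r)" for r \<alpha> \<beta>
  proof -
    have h: "hom (length \<alpha> + 2*l + length \<beta>) (T \<alpha> \<beta>)" unfolding T_def by (intro hom_tmul hom_ev hz)
    have eq: "length \<alpha> + 2*l + length \<beta> = N" using that by (auto simp: N_def Words_def)
    show ?thesis using h unfolding eq .
  qed
  have hSE: "hom N SE" unfolding SE_def using hE by (intro hom_sum1) auto
  have hSO1: "hom N (\<lambda>w. \<Sum>x'\<in>UNIV. \<Sum>y'\<in>UNIV. P x' y' * Od j x' y' w)" if "j < l" for j
    using hO[OF that] by (intro hom_sum1 ballI hom_scale) auto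
  have hSO2: "hom N (\<lambda>w. \<Sum>y'\<in>UNIV. P x' y' * Od j x' y' w)" if "j < l" for j x'
    using hO[OF that] by (intro hom_sum1 ballI hom_scale) auto
  have hSO: "hom N SO" unfolding SO_def by (rule hom_sum1) (use hSO1 in auto)
  have hST2: "hom N (\<lambda>w. \<Sum>\<beta>\<in>Words (n+2*l-r). x (\<beta> @ \<alpha>) * T \<alpha> \<beta> w)"
    if "r \<in> {2*l<..<n+2*l}" "\<alpha> \<in> Words (r-2*l)" for r \<alpha>
    using hT[OF that] by (intro hom_sum1 ballI hom_scale) auto
  have hST1: "hom N (\<lambda>w. \<Sum>\<alpha>\<in>Words (r-2*l). \<Sum>\<beta>\<in>Words (n+2*l-r). x (\<beta> @ \<alpha>) * T \<alpha> \<beta> w)"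
    if "r \<in> {2*l<..<n+2*l}" for r
    by (rule hom_sum1) (use hST2[OF that] in auto)
  have hST: "hom N ST" unfolding ST_def by (rule hom_sum1) (use hST1 in auto)
  have tN: "tgt \<in> NW N" using tgt_NW by (simp add: N_def)
  have cO': "P x' y' * coef N (Od j x' y') tgt = (if j = l-1 \<and> x' = a \<and> y' = b \<and> B = C then P a b else 0)"
    if "j < l" for j x' y'
    unfolding Od_def x_def N_def by (rule cO[OF B that])
  have "coef N (\<lambda>w. SE w + SO w + ST w) tgt = coef N (\<lambda>w. SE w + SO w) tgt + coef N ST tgt"
    by (rule coef_add[OF hom_add[OF hSE hSO] hST tN])
  also have "coef N (\<lambda>w. SE w + SO w) tgt = coef N SE tgt + coef N SO tgt"
    by (rule coef_add[OF hSE hSO tN])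
  also have "coef N SE tgt = 0"
  proof -
    have "coef N SE tgt = (\<Sum>i\<le>l. coef N (E i) tgt)"
      unfolding SE_def by (rule coef_sum1) (use hE tN in auto)
    also have "\<dots> = 0" using cE[OF B(1)] by (simp add: E_def x_def N_def)
    finally show ?thesis .
  qed
  also have "coef N ST tgt = 0"
  proof -
    have "coef N ST tgt = (\<Sum>r\<in>{2*l<..<n+2*l}. coef N (\<lambda>w. \<Sum>\<alpha>\<in>Words (r-2*l). \<Sum>\<beta>\<in>Words (n+2*l-r). x (\<beta> @ \<alpha>) * T \<alpha> \<beta> w) tgt)"
      unfolding ST_def by (rule coef_sum1) (use hST1 tN in auto)
    also have "\<dots> = (\<Sum>r\<in>{2*l<..<n+2*l}. \<Sum>\<alpha>\<in>Words (r-2*l). coef N (\<lambda>w. \<Sum>\<beta>\<in>Words (n+2*l-r). x (\<beta> @ \<alpha>) * T \<alpha> \<beta> w) tgt)"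
      by (intro sum.cong refl coef_sum1) (use hST2 tN finW in auto)
    also have "\<dots> = (\<Sum>r\<in>{2*l<..<n+2*l}. \<Sum>\<alpha>\<in>Words (r-2*l). \<Sum>\<beta>\<in>Words (n+2*l-r). x (\<beta> @ \<alpha>) * coef N (T \<alpha> \<beta>) tgt)"
      by (intro sum.cong refl coef_sum) (use hT tN finW in auto)
    also have "\<dots> = 0" using cT by (simp add: T_def N_def)
    finally show ?thesis .
  qed
  also have "coef N SO tgt = (if B = C then P a b else 0)"
  proof -
    have "coef N SO tgt = (\<Sum>j<l. coef N (\<lambda>w. \<Sum>x'\<in>UNIV. \<Sum>y'\<in>UNIV. P x' y' * Od j x' y' w) tgt)"
      unfolding SO_def by (rule coef_sum1) (use hSO1 tN in auto)
    also have "\<dots> = (\<Sum>j<l. \<Sum>x'\<in>UNIV. coef N (\<lambda>w. \<Sum>y'\<in>UNIV. P x' y' * Od j x' y' w) tgt)"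
      by (intro sum.cong refl coef_sum1) (use hSO2 tN in auto)
    also have "\<dots> = (\<Sum>j<l. \<Sum>x'\<in>UNIV. \<Sum>y'\<in>UNIV. P x' y' * coef N (Od j x' y') tgt)"
      by (intro sum.cong refl coef_sum) (use hO tN in auto)
    also have "\<dots> = (\<Sum>j<l. \<Sum>x'\<in>UNIV. \<Sum>y'\<in>UNIV. (if j = l-1 \<and> x' = a \<and> y' = b \<and> B = C then P a b else 0))"
      by (intro sum.cong refl, rule cO') auto
    also have "\<dots> = (\<Sum>j<l. if j = l-1 then (if B = C then P a b else 0) else 0)"
    proof (intro sum.cong refl)
      fix j
      have "(\<Sum>x'\<in>UNIV. \<Sum>y'\<in>UNIV. (if j = l-1 \<and> x' = a \<and> y' = b \<and> B = C then P a b else 0)) =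
          (\<Sum>x'\<in>UNIV. if x' = a then (\<Sum>y'\<in>UNIV. if y' = b then (if j = l-1 \<and> B = C then P a b else 0) else 0) else 0)"
        by (intro sum.cong refl) auto
      also have "\<dots> = (if j = l-1 \<and> B = C then P a b else 0)" by simp
      finally show "(\<Sum>x'\<in>UNIV. \<Sum>y'\<in>UNIV. (if j = l-1 \<and> x' = a \<and> y' = b \<and> B = C then P a b else 0)) =
          (if j = l-1 then (if B = C then P a b else 0) else 0)" by simp
    qed
    also have "\<dots> = (if B = C then P a b else 0)" using l3 by (subst sum.delta) auto
    finally show ?thesis .
  qed
  finally show ?thesis using dec by (simp add: x_def N_def)
qed

end

context zb begin

definition abw :: "nat \<Rightarrow> 'i list" where "abw M = concat (replicate M [a, b])"
definition baw :: "nat \<Rightarrow> 'i list" where "baw M = concat (replicate M [b, a])"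

lemma length_abw[simp]: "length (abw M) = 2 * M" by (induction M) (auto simp: abw_def)
lemma length_baw[simp]: "length (baw M) = 2 * M" by (induction M) (auto simp: baw_def)

lemma abw_Suc: "abw (Suc M) = a # b # abw M" by (simp add: abw_def)
lemma baw_Suc: "baw (Suc M) = b # a # baw M" by (simp add: baw_def)

lemma abw_snoc: "abw (Suc M) = b # a # baw M \<Longrightarrow> False"
  using ab by (simp add: abw_Suc)

lemma baw_shift: "b # abw M @ [a] = baw (Suc M)"
  by (induction M) (auto simp: abw_Suc baw_Suc abw_def baw_def)

lemma abw_shift: "a # baw M @ [b] = abw (Suc M)"
  by (induction M) (auto simp: abw_Suc baw_Suc abw_def baw_def)

lemma rotate1_abw: "1 \<le> M \<Longrightarrow> rotate1 (abw M) = baw M"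
proof -
  assume "1 \<le> M"
  then obtain M' where M: "M = Suc M'" by (cases M) auto
  have "rotate1 (abw M) = b # abw M' @ [a]" by (simp add: M abw_Suc)
  then show ?thesis using baw_shift M by simp
qed

lemma rotate1_baw: "1 \<le> M \<Longrightarrow> rotate1 (baw M) = abw M"
proof -
  assume "1 \<le> M"
  then obtain M' where M: "M = Suc M'" by (cases M) auto
  have "rotate1 (baw M) = a # baw M' @ [b]" by (simp add: M baw_Suc)
  then show ?thesis using abw_shift M by simp
qed

lemma rotate_abw: "1 \<le> M \<Longrightarrow> rotate r (abw M) = abw M \<or> rotate r (abw M) = baw M"
proof (induction r)
  case 0 then show ?case by simp
next
  case (Suc r)
  then show ?case using rotate1_abw rotate1_baw by (auto simp: rotate_Suc)
qed

lemma pe_abw: "pe P (replicate M None) (abw M) = P a b ^ M"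
  by (induction M) (auto simp: abw_Suc abw_def)

lemma pe_baw: "pe P (replicate M None) (baw M) = P b a ^ M"
  by (induction M) (auto simp: baw_Suc baw_def)

lemma Cyc_power:
  assumes "even M" "1 \<le> M"
  shows "Cyc (pe P (replicate M None)) (abw M) = of_nat (2 * M) * P a b ^ M"
proof -
  have "P b a ^ M = P a b ^ M" using assms(1) antisym[of b a] by (simp add: power_minus_even)
  then have "\<forall>r. pe P (replicate M None) (rotate r (abw M)) = P a b ^ M"
    using rotate_abw[OF assms(2)] pe_abw pe_baw by metis
  then show ?thesis by (simp add: Cyc_def)
qed

end

lemma tcomm_add_right: "tcomm x (\<lambda>w. f w + g w) = (\<lambda>w. tcomm x f w + tcomm x g w)"
  unfolding tcomm_def tmul_add_right tmul_add_left by (rule ext) simp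

lemma tcomm_scale_right: "tcomm x (\<lambda>w. c * f w) = (\<lambda>w. c * tcomm x f w)"
  unfolding tcomm_def tmul_scale_right tmul_scale_left by (rule ext) (simp add: right_diff_distrib)

lemma tcomm_sum_right: "tcomm x (\<lambda>w. \<Sum>i\<in>I. f i w) = (\<lambda>w. \<Sum>i\<in>I. tcomm x (f i) w)"
  unfolding tcomm_def tmul_sum_right tmul_sum_left by (rule ext) (simp add: sum_subtractf)

lemma tcomm_zero_right: "tcomm x (\<lambda>w. 0) = (\<lambda>w. 0)"
  unfolding tcomm_def tmul_zero_right tmul_zero_left by simp

definition Yk :: "('i \<Rightarrow> 'i \<Rightarrow> 'k::comm_ring_1) \<Rightarrow> nat \<Rightarrow> 'i option list \<Rightarrow> ('i, 'k) ctensor" where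
  "Yk P k D = (\<lambda>w. \<Sum>i<k. pe P (replicate (k-1-i) None @ D @ replicate i None) w)"

lemma pe_None_step: "pe P (None # E) = (\<lambda>w. pe P (E @ [None]) w + tcomm (pe P [None]) (pe P E) w)"
proof -
  have "tcomm (pe P [None]) (pe P E) = (\<lambda>w. pe P ([None] @ E) w - pe P (E @ [None]) w)"
    unfolding tcomm_def by (simp only: pe_append_tmul)
  then show ?thesis by (simp del: pe.simps)
qed

lemma rot_step:
  "pe P (replicate k None @ D) = (\<lambda>w. pe P (D @ replicate k None) w + tcomm (pe P [None]) (Yk P k D) w)"
proof (induction k arbitrary: D)
  case 0
  have "Yk P 0 D = (\<lambda>w. 0)" by (simp add: Yk_def)
  then show ?case by (simp add: tcomm_zero_right)
next
  case (Suc k)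
  have s1: "pe P (None # (replicate k None @ D)) =
      (\<lambda>w. pe P (replicate k None @ D @ [None]) w + tcomm (pe P [None]) (pe P (replicate k None @ D)) w)"
    using pe_None_step[of P "replicate k None @ D"] by simp
  have IH: "pe P (replicate k None @ (D @ [None])) =
      (\<lambda>w. pe P ((D @ [None]) @ replicate k None) w + tcomm (pe P [None]) (Yk P k (D @ [None])) w)"
    by (rule Suc.IH)
  have e1: "(D @ [None]) @ replicate k None = D @ replicate (Suc k) None"
    by (simp add: replicate_app_Cons_same)
  have Ysuc: "Yk P (Suc k) D = (\<lambda>w. pe P (replicate k None @ D) w + Yk P k (D @ [None]) w)"
  proof
    fix w
    have "Yk P (Suc k) D w = pe P (replicate k None @ D) w +
        (\<Sum>i<k. pe P (replicate (Suc k - 1 - Suc i) None @ D @ replicate (Suc i) None) w)"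
      unfolding Yk_def sum.lessThan_Suc_shift by simp
    also have "(\<Sum>i<k. pe P (replicate (Suc k - 1 - Suc i) None @ D @ replicate (Suc i) None) w) = Yk P k (D @ [None]) w"
      unfolding Yk_def by (intro sum.cong refl) (simp add: replicate_app_Cons_same)
    finally show "Yk P (Suc k) D w = pe P (replicate k None @ D) w + Yk P k (D @ [None]) w" .
  qed
  have "pe P (replicate (Suc k) None @ D) = pe P (None # (replicate k None @ D))" by simp
  also have "\<dots> = (\<lambda>w. pe P (D @ replicate (Suc k) None) w + tcomm (pe P [None]) (Yk P k (D @ [None])) w
       + tcomm (pe P [None]) (pe P (replicate k None @ D)) w)"
    using s1 IH e1 by simp
  also have "\<dots> = (\<lambda>w. pe P (D @ replicate (Suc k) None) w + tcomm (pe P [None]) (Yk P (Suc k) D) w)"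
    unfolding Ysuc tcomm_add_right by (simp add: add_ac)
  finally show ?case .
qed

lemma hom_zero: "hom m (\<lambda>w. 0)" by (simp add: hom_def)

lemma hom_Yk: "1 \<le> k \<Longrightarrow> hom (wt D + 2*(k-1)) (Yk P k D)"
  unfolding Yk_def by (intro hom_sum1 ballI) (auto simp: hom_def pe_len)

lemma tcomm_tmul_shift:
  assumes hy: "hom m y"
  shows "tmul (tcomm (pe P [None]) y) (pe P (replicate l None)) = tcomm (pe P [None]) (tmul y (pe P (replicate l None)))"
proof -
  have h1: "hom 2 (pe P [None])" using hom_pe[of "[None]" P] by (simp add: numeral_2_eq_2)
  have hz: "hom (2*l) (pe P (replicate l None))" by (metis hom_pe wt_replicate_None)
  have c: "tmul (pe P [None]) (pe P (replicate l None)) = tmul (pe P (replicate l None)) (pe P [None])"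
    by (simp only: pe_append_tmul[symmetric]) (simp add: replicate_append_same)
  have "tmul (tcomm (pe P [None]) y) (pe P (replicate l None)) =
      (\<lambda>w. tmul (tmul (pe P [None]) y) (pe P (replicate l None)) w - tmul (tmul y (pe P [None])) (pe P (replicate l None)) w)"
    unfolding tcomm_def tmul_diff_left by simp
  also have "tmul (tmul (pe P [None]) y) (pe P (replicate l None)) = tmul (pe P [None]) (tmul y (pe P (replicate l None)))"
    by (rule tmul_assoc_hom[OF h1 hy hz])
  also have "tmul (tmul y (pe P [None])) (pe P (replicate l None)) = tmul y (tmul (pe P [None]) (pe P (replicate l None)))"
    by (rule tmul_assoc_hom[OF hy h1 hz])
  also have "\<dots> = tmul y (tmul (pe P (replicate l None)) (pe P [None]))" by (simp only: c)
  also have "\<dots> = tmul (tmul y (pe P (replicate l None))) (pe P [None])"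
    by (rule tmul_assoc_hom[OF hy hz h1, symmetric])
  finally have X: "tmul (tcomm (pe P [None]) y) (pe P (replicate l None)) =
      (\<lambda>w. tmul (pe P [None]) (tmul y (pe P (replicate l None))) w - tmul (tmul y (pe P (replicate l None))) (pe P [None]) w)" .
  show ?thesis by (subst X) (simp only: tcomm_def)
qed

lemma Cyc_sum: "Cyc (\<lambda>w. \<Sum>i\<in>I. c i * f i w) = (\<lambda>w. \<Sum>i\<in>I. c i * Cyc (f i) w)"
  unfolding Cyc_def by (rule ext) (simp add: sum_distrib_left, rule sum.swap)

lemma Cyc_scale: "Cyc (\<lambda>w. c * f w) = (\<lambda>w. c * Cyc f w)"
  unfolding Cyc_def by (rule ext) (simp add: sum_distrib_left)

lemma takeWhile_None: "takeWhile (\<lambda>s. s = None) B = replicate (length (takeWhile (\<lambda>s. s = None) B)) None"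
proof -
  have "\<forall>s\<in>set (takeWhile (\<lambda>s. s = None) B). s = None" by (auto dest: set_takeWhileD)
  then show ?thesis by (simp add: replicate_length_same)
qed

context zb begin

definition kB where "kB B = length (takeWhile (\<lambda>s. s = None) B)"
definition DB where "DB B = dropWhile (\<lambda>s. s = None) B"
definition rotB where "rotB B = DB B @ replicate (kB B) None"

lemma Bsplit: "B = replicate (kB B) None @ DB B"
  unfolding kB_def DB_def using takeWhile_None[of B] takeWhile_dropWhile_id[of "\<lambda>s. s = None" B] by metis

lemma peB: "pe P B = (\<lambda>w. pe P (rotB B) w + tcomm (pe P [None]) (Yk P (kB B) (DB B)) w)"
  using rot_step[of P "kB B" "DB B"] Bsplit[of B] unfolding rotB_def by metis

lemma wt_rotB: "wt (rotB B) = wt B"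
  using Bsplit[of B] unfolding rotB_def by (metis add.commute wt_append)

lemma rotB_NW: "B \<in> NW n \<Longrightarrow> rotB B \<in> NW n"
proof -
  assume B: "B \<in> NW n"
  have "normal (replicate (kB B) None @ DB B)" using B Bsplit[of B] by (simp add: NW_def)
  then have nD: "normal (DB B)" by (simp add: normal_append)
  have "normal (DB B @ replicate (kB B) None)"
    using nD normal_repl[of "kB B"] by (auto simp: normal_append hd_replicate)
  then show ?thesis using B wt_rotB[of B] by (simp add: NW_def rotB_def)
qed

lemma rotB_hd: "rotB B \<noteq> [] \<Longrightarrow> hd (rotB B) = None \<Longrightarrow> \<forall>s\<in>set (rotB B). s = None"
proof -
  assume ne: "rotB B \<noteq> []" and h: "hd (rotB B) = None"
  have "DB B = []"
  proof (rule ccontr)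
    assume "DB B \<noteq> []"
    then have "hd (DB B) \<noteq> None" using hd_dropWhile[of "\<lambda>s. s = None" B] unfolding DB_def by simp
    moreover have "hd (rotB B) = hd (DB B)" using \<open>DB B \<noteq> []\<close> by (simp add: rotB_def)
    ultimately show False using h by simp
  qed
  then show ?thesis by (simp add: rotB_def)
qed

lemma hom_YB: "B \<in> NW n \<Longrightarrow> hom (n - 2) (Yk P (kB B) (DB B))"
proof -
  assume B: "B \<in> NW n"
  show ?thesis
  proof (cases "kB B = 0")
    case True
    then have "Yk P (kB B) (DB B) = (\<lambda>w. 0)" by (simp add: Yk_def)
    then show ?thesis by (simp add: hom_zero)
  next
    case False
    have "wt B = wt (replicate (kB B) None @ DB B)" using Bsplit[of B] by (rule arg_cong)
    then have "wt B = wt (DB B) + 2 * kB B" by simp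
    then have eq: "wt (DB B) + 2 * kB B = n" using B by (simp add: NW_def)
    then have "n - 2 = wt (DB B) + 2 * (kB B - 1)" using False by (cases "kB B") auto
    then show ?thesis using hom_Yk[of "kB B" "DB B" P] False by simp
  qed
qed

end

context zb begin

lemma good_zero:
  fixes x' :: "('i, 'k) ctensor"
  assumes hx': "hom n x'"
    and H': "\<And>l. 1 \<le> l \<Longrightarrow> Cyc (tmul x' (pe P (replicate l None))) = (\<lambda>w. 0)"
    and bad: "\<And>B. B \<in> NW n \<Longrightarrow> B \<noteq> [] \<Longrightarrow> hd B = None \<Longrightarrow> \<not> (\<forall>s\<in>set B. s = None) \<Longrightarrow> coef n x' B = 0"
    and C: "C \<in> NW n" "C \<noteq> []" "hd C \<noteq> None"
  shows "coef n x' C = 0"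
proof -
  define J where "J = length (takeWhile (\<lambda>s. s = None) (rev C))"
  define B0 where "B0 = rev (dropWhile (\<lambda>s. s = None) (rev C))"
  have Cdec: "C = B0 @ replicate J None"
  proof -
    have "rev C = replicate J None @ dropWhile (\<lambda>s. s = None) (rev C)"
      unfolding J_def using takeWhile_None[of "rev C"] takeWhile_dropWhile_id[of "\<lambda>s. s = None" "rev C"] by metis
    then have "C = rev (replicate J None @ dropWhile (\<lambda>s. s = None) (rev C))" by (metis rev_rev_ident)
    then show ?thesis by (simp add: B0_def)
  qed
  have B0ne: "B0 \<noteq> []"
  proof
    assume "B0 = []"
    then have "C = replicate J None" using Cdec by simp
    then show False using C(2,3) by (cases J) auto
  qed
  have hdB0: "hd B0 \<noteq> None" using C(3) Cdec B0ne by simp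
  have lastB0: "last B0 \<noteq> None"
  proof -
    have ne: "dropWhile (\<lambda>s. s = None) (rev C) \<noteq> []" using B0ne by (simp add: B0_def)
    have "last B0 = hd (dropWhile (\<lambda>s. s = None) (rev C))"
      unfolding B0_def using ne by (simp add: last_rev)
    then show ?thesis using hd_dropWhile[OF ne] by simp
  qed
  interpret T: zbt P a b n C B0 J "n + 2"
    by unfold_locales (use C Cdec B0ne hdB0 lastB0 in auto)
  define l where "l = n + 2"
  define N where "N = n + 2 * l"
  define c' where "c' = coef n x'"
  have x'l: "x' = lc n c'" unfolding c'_def by (rule coef_lc[OF hx'])
  have hz: "hom (2*l) (pe P (replicate l None))" by (metis hom_pe wt_replicate_None)
  have hB: "hom N (Cyc (tmul (pe P B) (pe P (replicate l None))))" if "B \<in> NW n" for B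
  proof -
    have "hom (n + 2*l) (tmul (pe P B) (pe P (replicate l None)))"
      using hom_tmul[OF hom_pe[of B P] hz] that by (simp add: NW_def)
    then show ?thesis unfolding N_def by (rule Cyc_hom)
  qed
  have e: "Cyc (tmul x' (pe P (replicate l None))) = (\<lambda>w. \<Sum>B\<in>NW n. c' B * Cyc (tmul (pe P B) (pe P (replicate l None))) w)"
    unfolding x'l tmul_lc_left Cyc_sum by simp
  have tN: "T.tgt \<in> NW N" using T.tgt_NW by (simp add: N_def l_def)
  have "coef N (Cyc (tmul x' (pe P (replicate l None)))) T.tgt =
      (\<Sum>B\<in>NW n. c' B * coef N (Cyc (tmul (pe P B) (pe P (replicate l None)))) T.tgt)"
    unfolding e by (rule coef_sum[OF finite_NW _ tN]) (use hB in auto)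
  also have "\<dots> = (\<Sum>B\<in>NW n. if B = C then c' C * P a b else 0)"
  proof (intro sum.cong refl)
    fix B assume B: "B \<in> NW n"
    show "c' B * coef N (Cyc (tmul (pe P B) (pe P (replicate l None)))) T.tgt = (if B = C then c' C * P a b else 0)"
    proof (cases "c' B = 0")
      case True then show ?thesis by auto
    next
      case False
      have Bne: "B \<noteq> []" using B T.n1 by (auto simp: NW_def)
      have cond: "hd B \<noteq> None \<or> (\<forall>s\<in>set B. s = None)" using bad[OF B Bne] False unfolding c'_def by blast
      show ?thesis using T.Phi[OF B cond] by (simp add: N_def l_def)
    qed
  qed
  also have "\<dots> = c' C * P a b" using C(1) finite_NW by simp
  finally have "c' C * P a b = coef N (Cyc (tmul x' (pe P (replicate l None)))) T.tgt" by simp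
  also have "\<dots> = 0" using H'[of l] coef_zero[OF tN] by (simp add: l_def)
  finally show ?thesis using Pab by (simp add: c'_def)
qed

theorem degree_thm:
  fixes x :: "('i, 'k) ctensor"
  assumes hx: "hom n x" and H: "\<And>l. 1 \<le> l \<Longrightarrow> Cyc (tmul x (pe P (replicate l None))) = (\<lambda>w. 0)"
  shows "\<exists>y. hom (n - 2) y \<and> x = tcomm (pe P [None]) y"
proof -
  define c where "c = coef n x"
  have xl: "x = lc n c" using coef_lc[OF hx] by (simp add: c_def)
  define x' where "x' = (\<lambda>w. \<Sum>B\<in>NW n. c B * pe P (rotB B) w)"
  define y where "y = (\<lambda>w. \<Sum>B\<in>NW n. c B * Yk P (kB B) (DB B) w)"
  have hy: "hom (n-2) y" unfolding y_def
    by (rule hom_sum1) (auto intro: hom_scale hom_YB)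
  have hx': "hom n x'" unfolding x'_def
  proof (rule hom_sum1, rule ballI)
    fix B assume B: "B \<in> NW n"
    have "hom (wt (rotB B)) (pe P (rotB B))" by (rule hom_pe)
    then show "hom n (\<lambda>w. c B * pe P (rotB B) w)" using B wt_rotB[of B] by (auto simp: NW_def intro: hom_scale)
  qed
  have xdec: "x = (\<lambda>w. x' w + tcomm (pe P [None]) y w)"
  proof
    fix w
    have "x w = (\<Sum>B\<in>NW n. c B * pe P B w)" using xl by (simp add: lc_def)
    also have "\<dots> = (\<Sum>B\<in>NW n. c B * (pe P (rotB B) w + tcomm (pe P [None]) (Yk P (kB B) (DB B)) w))"
      by (intro sum.cong refl) (metis peB)
    also have "\<dots> = x' w + (\<Sum>B\<in>NW n. c B * tcomm (pe P [None]) (Yk P (kB B) (DB B)) w)"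
      by (simp add: distrib_left sum.distrib x'_def)
    also have "(\<Sum>B\<in>NW n. c B * tcomm (pe P [None]) (Yk P (kB B) (DB B)) w) = tcomm (pe P [None]) y w"
      unfolding y_def tcomm_sum_right tcomm_scale_right by simp
    finally show "x w = x' w + tcomm (pe P [None]) y w" .
  qed
  have H': "Cyc (tmul x' (pe P (replicate l None))) = (\<lambda>w. 0)" if l: "1 \<le> l" for l
  proof -
    have "x' = (\<lambda>w. x w - tcomm (pe P [None]) y w)" using xdec by (simp add: fun_eq_iff)
    then have "tmul x' (pe P (replicate l None)) =
        (\<lambda>w. tmul x (pe P (replicate l None)) w - tmul (tcomm (pe P [None]) y) (pe P (replicate l None)) w)"
      by (simp add: tmul_diff_left)
    also have "tmul (tcomm (pe P [None]) y) (pe P (replicate l None)) = tcomm (pe P [None]) (tmul y (pe P (replicate l None)))"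
      by (rule tcomm_tmul_shift[OF hy])
    finally have "Cyc (tmul x' (pe P (replicate l None))) =
        (\<lambda>w. Cyc (tmul x (pe P (replicate l None))) w - Cyc (tcomm (pe P [None]) (tmul y (pe P (replicate l None)))) w)"
      by (simp add: Cyc_diff)
    moreover have "Cyc (tcomm (pe P [None]) (tmul y (pe P (replicate l None)))) = (\<lambda>w. 0)" by (rule Cyc_tcomm)
    ultimately show ?thesis using H[OF l] by simp
  qed
  define c' where "c' = coef n x'"
  have x'l: "x' = lc n c'" unfolding c'_def by (rule coef_lc[OF hx'])
  have c'val: "c' C = (\<Sum>B\<in>NW n. c B * (if C = rotB B then 1 else 0))" if C: "C \<in> NW n" for C
  proof -
    have "c' C = (\<Sum>B\<in>NW n. c B * coef n (pe P (rotB B)) C)"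
      unfolding c'_def x'_def by (rule coef_sum[OF finite_NW _ C])
        (auto intro: hom_pe[of "rotB _", simplified wt_rotB] simp: NW_def wt_rotB)
    also have "\<dots> = (\<Sum>B\<in>NW n. c B * (if C = rotB B then 1 else 0))"
      by (intro sum.cong refl) (simp add: coef_pe[OF rotB_NW C])
    finally show ?thesis .
  qed
  have bad: "coef n x' B = 0" if B: "B \<in> NW n" "B \<noteq> []" "hd B = None" "\<not> (\<forall>s\<in>set B. s = None)" for B
  proof -
    have "\<forall>B'\<in>NW n. c B' * (if B = rotB B' then 1 else 0) = 0"
      using rotB_hd B by fastforce
    then have "(\<Sum>B'\<in>NW n. c B' * (if B = rotB B' then 1 else 0)) = 0" by (intro sum.neutral) blast
    then show ?thesis using c'val[OF B(1)] by (simp add: c'_def)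
  qed
  have good: "c' C = 0" if "C \<in> NW n" "C \<noteq> []" "hd C \<noteq> None" for C
    unfolding c'_def by (rule good_zero[OF hx' H' bad that]) auto
  define Z0 where "Z0 = replicate (n div 2) (None :: 'i option)"
  have allN: "c' B = 0" if B: "B \<in> NW n" "B \<noteq> Z0" for B
  proof (cases "B = []")
    case True
    then have "n = 0" using B by (simp add: NW_def)
    then show ?thesis using B True by (simp add: Z0_def)
  next
    case Bne: False
    show ?thesis
    proof (cases "hd B = None")
      case False then show ?thesis using good B Bne by blast
    next
      case hdN: True
      show ?thesis
      proof (cases "\<forall>s\<in>set B. s = None")
        case True
        then have "B = replicate (length B) None" by (simp add: replicate_length_same)
        then obtain k where Bk: "B = replicate k None" by blast
        have "wt B = n" using B by (simp add: NW_def)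
        then have "n = 2 * k" using Bk by simp
        then have "B = Z0" unfolding Z0_def using Bk by simp
        then show ?thesis using B by simp
      next
        case False then show ?thesis using bad[OF B(1) Bne hdN False] by (simp add: c'_def)
      qed
    qed
  qed
  have x'Z: "x' = (\<lambda>w. (if Z0 \<in> NW n then c' Z0 else 0) * pe P Z0 w)"
  proof
    fix w
    have "x' w = (\<Sum>B\<in>NW n. c' B * pe P B w)" using x'l by (simp add: lc_def)
    also have "\<dots> = (\<Sum>B\<in>NW n. if B = Z0 then c' Z0 * pe P Z0 w else 0)"
      by (intro sum.cong refl) (auto simp: allN)
    also have "\<dots> = (if Z0 \<in> NW n then c' Z0 else 0) * pe P Z0 w" using finite_NW by simp
    finally show "x' w = (if Z0 \<in> NW n then c' Z0 else 0) * pe P Z0 w" .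
  qed
  have c0: "c' Z0 = 0" if Z0N: "Z0 \<in> NW n"
  proof -
    define m where "m = n div 2"
    define l where "l = (if even m then 2 else (1::nat))"
    define M where "M = m + l"
    have eM: "even M" and M1: "1 \<le> M" and l1: "1 \<le> l" by (auto simp: M_def l_def)
    have "tmul x' (pe P (replicate l None)) = (\<lambda>w. c' Z0 * tmul (pe P Z0) (pe P (replicate l None)) w)"
      using Z0N by (simp add: x'Z tmul_scale_left)
    also have "tmul (pe P Z0) (pe P (replicate l None)) = pe P (replicate M None)"
      by (simp add: pe_append_tmul[symmetric] Z0_def M_def m_def replicate_add)
    finally have "Cyc (tmul x' (pe P (replicate l None))) = (\<lambda>w. c' Z0 * Cyc (pe P (replicate M None)) w)"
      by (simp add: Cyc_scale)
    then have "c' Z0 * Cyc (pe P (replicate M None)) (abw M) = 0" using H'[OF l1] by metis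
    then have "c' Z0 * (of_nat (2 * M) * P a b ^ M) = 0" using Cyc_power[OF eM M1] by simp
    then show ?thesis using Pab M1 by simp
  qed
  have "x' = (\<lambda>w. 0)" using x'Z c0 by auto
  then have "x = tcomm (pe P [None]) y" using xdec by simp
  then show ?thesis using hy by blast
qed

end

lemma tmul_lhom:
  assumes "hom p X"
  shows "tmul X y w = (if p \<le> length w then X (take p w) * y (drop p w) else 0)"
proof -
  have "tmul X y w = (\<Sum>k\<in>{..length w}. if k = p then X (take p w) * y (drop p w) else 0)"
    unfolding tmul_def
  proof (rule sum.cong[OF refl])
    fix k assume k: "k \<in> {..length w}"
    show "X (take k w) * y (drop k w) = (if k = p then X (take p w) * y (drop p w) else 0)"
    proof (cases "k = p")
      case False
      then have "length (take k w) \<noteq> p" using k by simp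
      then show ?thesis using False assms by (simp add: hom_def)
    qed simp
  qed
  also have "\<dots> = (if p \<le> length w then X (take p w) * y (drop p w) else 0)"
    by (subst sum.delta) auto
  finally show ?thesis .
qed

lemma tmul_rhom:
  assumes "hom q X"
  shows "tmul y X w = (if q \<le> length w then y (take (length w - q) w) * X (drop (length w - q) w) else 0)"
proof -
  have "tmul y X w = (\<Sum>k\<in>{..length w}. if k = length w - q \<and> q \<le> length w then y (take (length w - q) w) * X (drop (length w - q) w) else 0)"
    unfolding tmul_def
  proof (rule sum.cong[OF refl])
    fix k assume k: "k \<in> {..length w}"
    show "y (take k w) * X (drop k w) = (if k = length w - q \<and> q \<le> length w then y (take (length w - q) w) * X (drop (length w - q) w) else 0)"
    proof (cases "k = length w - q \<and> q \<le> length w")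
      case False
      then have "length (drop k w) \<noteq> q" using k by auto
      then have "X (drop k w) = 0" using assms by (simp add: hom_def)
      then show ?thesis using False by auto
    qed auto
  qed
  also have "\<dots> = (if q \<le> length w then y (take (length w - q) w) * X (drop (length w - q) w) else 0)"
    by (cases "q \<le> length w") (simp_all add: sum.delta)
  finally show ?thesis .
qed

theorem proposition3p9:
  fixes W P :: "'i::finite \<Rightarrow> 'i \<Rightarrow> 'k::field_char_0"
    and a :: "'i list \<Rightarrow> 'k"
  assumes "symplectic_form W"
    and "represents P W"
    and "\<forall>l::nat. l \<ge> 1 \<longrightarrow> cyc_zero (tmul a (tpow (bivector P) l))"
  shows "\<exists>b :: 'i list \<Rightarrow> 'k. a = tcomm (bivector P) b"
proof -
  have Wanti: "\<And>i j. W i j = - W j i" using assms(1) unfolding symplectic_form_def by blast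
  have PW: "\<And>i j. (\<Sum>k\<in>UNIV. P i k * W k j) = (if i = j then 1 else 0)"
    using assms(2) by (simp add: represents_def)
  define Q where "Q i j = - P j i" for i j
  have WQ: "(\<Sum>k\<in>UNIV. W i k * Q k j) = (if i = j then 1 else 0)" for i j
  proof -
    have "(\<Sum>k\<in>UNIV. W i k * Q k j) = (\<Sum>k\<in>UNIV. P j k * W k i)"
    proof (rule sum.cong[OF refl])
      fix k
      have "W i k = - W k i" by (rule Wanti)
      then show "W i k * Q k j = P j k * W k i" by (simp add: Q_def)
    qed
    also have "\<dots> = (if i = j then 1 else 0)" using PW[of j i] by auto
    finally show ?thesis .
  qed
  have Panti: "P i j = - P j i" for i j
  proof -
    have "(\<Sum>k\<in>UNIV. P i k * (if k = j then 1 else 0)) = (\<Sum>k\<in>UNIV. if k = j then P i k else 0)"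
      by (rule sum.cong) auto
    then have "P i j = (\<Sum>k\<in>UNIV. P i k * (if k = j then 1 else 0))" by simp
    also have "\<dots> = (\<Sum>k\<in>UNIV. P i k * (\<Sum>m\<in>UNIV. W k m * Q m j))" by (simp add: WQ)
    also have "\<dots> = (\<Sum>k\<in>UNIV. \<Sum>m\<in>UNIV. P i k * W k m * Q m j)"
      by (simp add: sum_distrib_left mult.assoc)
    also have "\<dots> = (\<Sum>m\<in>UNIV. \<Sum>k\<in>UNIV. P i k * W k m * Q m j)" by (rule sum.swap)
    also have "\<dots> = (\<Sum>m\<in>UNIV. (\<Sum>k\<in>UNIV. P i k * W k m) * Q m j)" by (simp add: sum_distrib_right)
    also have "\<dots> = (\<Sum>m\<in>UNIV. (if i = m then 1 else 0) * Q m j)" by (simp add: PW)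
    also have "\<dots> = (\<Sum>m\<in>UNIV. if i = m then Q m j else 0)" by (rule sum.cong) auto
    also have "\<dots> = Q i j" by simp
    finally show ?thesis by (simp add: Q_def)
  qed
  define p where "p = (undefined :: 'i)"
  have s1: "(\<Sum>k\<in>UNIV. P p k * W k p) = 1" using PW[of p p] by simp
  have "\<exists>q. P p q \<noteq> 0"
  proof (rule ccontr)
    assume "\<not> (\<exists>q. P p q \<noteq> 0)"
    then have "(\<Sum>k\<in>UNIV. P p k * W k p) = 0" by simp
    then show False using s1 by simp
  qed
  then obtain q where Ppq: "P p q \<noteq> 0" by blast
  have "P p p = 0" using Panti[of p p] by simp
  then have pq: "p \<noteq> q" using Ppq by auto
  interpret Z: zb P p q by unfold_locales (rule Panti, rule Ppq, rule pq)
  define an where "an n = (\<lambda>w. if length w = n then a w else 0)" for n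
  have han: "hom n (an n)" for n by (simp add: hom_def an_def)
  have Hn: "Cyc (tmul (an n) (pe P (replicate l None))) = (\<lambda>w. 0)" if l: "1 \<le> l" for n l
  proof
    fix w
    have hz: "hom (2*l) (pe P (replicate l None))" by (metis hom_pe wt_replicate_None)
    show "Cyc (tmul (an n) (pe P (replicate l None))) w = 0"
    proof (cases "length w = n + 2*l")
      case False
      have "hom (n + 2*l) (Cyc (tmul (an n) (pe P (replicate l None))))"
        by (rule Cyc_hom[OF hom_tmul[OF han hz]])
      then show ?thesis using False by (simp add: hom_def)
    next
      case True
      have "Cyc (tmul (an n) (pe P (replicate l None))) w = Cyc (tmul a (pe P (replicate l None))) w"
        unfolding Cyc_def
      proof (rule sum.cong[OF refl])
        fix r
        have lr: "length (rotate r w) = n + 2*l" using True by simp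
        show "tmul (an n) (pe P (replicate l None)) (rotate r w) = tmul a (pe P (replicate l None)) (rotate r w)"
          using lr by (simp add: tmul_rhom[OF hz] an_def)
      qed
      also have "\<dots> = 0"
        using assms(3) l Cyc_cyc_zero[of "tmul a (tpow (bivector P) l)" w] by (simp add: tpow_pe)
      finally show ?thesis .
    qed
  qed
  have "\<forall>n. \<exists>y. hom (n - 2) y \<and> an n = tcomm (pe P [None]) y"
    using Z.degree_thm[OF han Hn] by blast
  then obtain Yf where Yf: "\<And>n. hom (n - 2) (Yf n) \<and> an n = tcomm (pe P [None]) (Yf n)" by metis
  define bb where "bb = (\<lambda>v. Yf (length v + 2) v)"
  have h2: "hom 2 (pe P [None])" using hom_pe[of "[None]" P] by (simp add: numeral_2_eq_2)
  have "a = tcomm (bivector P) bb"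
  proof
    fix w :: "'i list"
    define n where "n = length w"
    have "a w = an n w" by (simp add: an_def n_def)
    also have "\<dots> = tcomm (pe P [None]) (Yf n) w" using Yf by metis
    also have "\<dots> = tcomm (pe P [None]) bb w"
    proof (cases "2 \<le> n")
      case True
      have e1: "length (drop 2 w) + 2 = n" using True by (simp add: n_def)
      have e2: "length (take (length w - 2) w) + 2 = n" using True by (simp add: n_def)
      have e3: "Suc (Suc (length w - 2)) = length w" using True by (simp add: n_def)
      show ?thesis unfolding tcomm_def
        using True by (simp add: tmul_lhom[OF h2] tmul_rhom[OF h2] bb_def e3 n_def del: pe.simps)
    next
      case False
      then show ?thesis unfolding tcomm_def by (simp add: tmul_lhom[OF h2] tmul_rhom[OF h2] n_def)
    qed
    finally show "a w = tcomm (bivector P) bb w" by (simp add: pe_None)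
  qed
  then show ?thesis by blast
qed

end
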